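(* Let $\rho=(\frac12,\ldots,\frac12)\in\mathbb{R}^8$ and let $P^{(1)}\subset\mathbb{R}^8$ be the convex hull of the vectors $e_i+e_j$ and $\rho-e_i-e_j$ ($0\le i<j\le7$). Then, inside the affine subspace $\{\alpha:\alpha\cdot\rho=1\}$, the bounding inequalities of $P^{(1)}$ are \[\alpha\cdot\delta\le1\quad(\delta\in R(E_7)),\qquad \alpha\cdot\mu\le2\quad(\mu\in\Lambda(E_8),\ \mu\cdot\rho=1,\ \mu\cdot\mu=4);\] that is, $P^{(1)}$ is the set of $\alpha$ with $\alpha\cdot\rho=1$ satisfying all these inequalities, and each is facet-defining.
   Context: $\Lambda(E_8)=\mathbb{Z}^8\cup(\mathbb{Z}^8+\rho)$ (the root lattice of $E_8$), $R(E_8)=\{v\in\Lambda(E_8):v\cdot v=2\}$, $R(E_7)=\{v\in R(E_8):v\cdot\rho=0\}$; $e_0,\ldots,e_7$ is the standard basis. *)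

theory Defs
  imports "HOL-Analysis.Analysis"
begin

text \<open>Vectors in R^8 are real^8; the standard basis vector e_i is axis i 1, indices i :: 8.\<close>

definition rho :: "real^8" where
  "rho = (\<chi> i. 1/2)"

definition Lambda_E8 :: "(real^8) set" where
  "Lambda_E8 = {v. (\<forall>i. v $ i \<in> \<int>) \<or> (\<forall>i. v $ i - 1/2 \<in> \<int>)}"

definition R_E8 :: "(real^8) set" where
  "R_E8 = {v \<in> Lambda_E8. v \<bullet> v = 2}"

definition R_E7 :: "(real^8) set" where
  "R_E7 = {v \<in> R_E8. v \<bullet> rho = 0}"

definition P1 :: "(real^8) set" where
  "P1 = convex hull
     ({axis i 1 + axis j 1 | i j :: 8. i < j} \<union> {rho - axis i 1 - axis j 1 | i j :: 8. i < j})"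

end

theory Submission
  imports Defs
begin


lemma c8: "card ({0,1,2,3,4,5,6,7}::8 set) = 8" by simp
lemma UNIV8: "(UNIV::8 set) = {0,1,2,3,4,5,6,7}"
  by (rule sym, rule card_subset_eq) (simp_all add: c8)
lemma sum8: "sum f (UNIV::8 set) = f 0 + f 1 + f 2 + f 3 + f 4 + f 5 + f 6 + f 7"
  unfolding UNIV8 by (simp add: add.assoc)
lemma all8: "(\<forall>i::8. P i) \<longleftrightarrow> P 0 \<and> P 1 \<and> P 2 \<and> P 3 \<and> P 4 \<and> P 5 \<and> P 6 \<and> P 7"
proof
  assume "P 0 \<and> P 1 \<and> P 2 \<and> P 3 \<and> P 4 \<and> P 5 \<and> P 6 \<and> P 7"
  then have "\<forall>i\<in>{0,1,2,3,4,5,6,7}. P i" by simp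
  then show "\<forall>i. P i" unfolding UNIV8[symmetric] by simp
qed simp
lemma ex8: "(\<exists>i::8. P i) \<longleftrightarrow> P 0 \<or> P 1 \<or> P 2 \<or> P 3 \<or> P 4 \<or> P 5 \<or> P 6 \<or> P 7"
  using all8[of "\<lambda>i. \<not> P i"] by blast

lemma rho_nth[simp]: "rho $ i = 1/2" by (simp add: rho_def)

lemma inner_rho: "x \<bullet> rho = (\<Sum>i\<in>UNIV. x $ i) / 2"
  by (simp add: inner_vec_def sum_divide_distrib)

lemma rho_rho: "rho \<bullet> rho = 2"
  by (simp add: inner_rho)

lemma axis_rho[simp]: "axis i 1 \<bullet> rho = 1/2" "rho \<bullet> axis i 1 = 1/2"
  by (simp_all add: inner_axis inner_commute[of "axis i 1"])

lemma test: "(axis 0 1 + axis 2 1 :: real^8) \<noteq> rho - axis 1 1 - axis 2 1"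
  by (simp add: vec_eq_iff ex8 axis_def)


lemma one_le_sum: "(\<And>k. f k \<ge> (0::real)) \<Longrightarrow> f i \<le> sum f (UNIV::8 set)"
  by (rule member_le_sum) auto
lemma two_le_sum: assumes "\<And>k. f k \<ge> (0::real)" "i \<noteq> j"
  shows "f i + f j \<le> sum f (UNIV::8 set)"
proof -
  have "sum f {i,j} \<le> sum f UNIV" by (rule sum_mono2) (use assms in auto)
  then show ?thesis using assms by simp
qed

lemma Ints_sq_plus: "(t::real) \<in> \<int> \<Longrightarrow> t*t + t \<ge> 0"
proof -
  assume "t \<in> \<int>" then obtain n where n: "t = of_int n" by (auto elim: Ints_cases)
  have "n*(n+1) \<ge> 0"
  proof (cases "n \<ge> 0")
    case True then show ?thesis by simp
  next
    case False then show ?thesis by (intro mult_nonpos_nonpos) auto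
  qed
  then have "real_of_int (n*(n+1)) \<ge> 0" by linarith
  then show ?thesis using n by (simp add: algebra_simps)
qed

lemma Ints_sq_minus: "(t::real) \<in> \<int> \<Longrightarrow> t*t - t \<ge> 0"
  using Ints_sq_plus[of "-t"] by simp

lemma half_sq: "(t::real) - 1/2 \<in> \<int> \<Longrightarrow> t*t - 1/4 \<ge> 0"
proof -
  assume "t - 1/2 \<in> \<int>"
  then have "(t - 1/2) * (t - 1/2) + (t - 1/2) \<ge> 0" by (rule Ints_sq_plus)
  then show ?thesis by (simp add: algebra_simps)
qed

lemma Ints_gt: "(z::real) \<in> \<int> \<Longrightarrow> z > k \<Longrightarrow> k \<in> \<int> \<Longrightarrow> z \<ge> k + 1"
proof -
  assume "z \<in> \<int>" "z > k" "k \<in> \<int>"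
  then obtain a b where ab: "z = of_int a" "k = of_int b" by (auto elim!: Ints_cases)
  with \<open>z > k\<close> have "a > b" by simp
  then have "a \<ge> b + 1" by simp
  then show ?thesis using ab by simp
qed
lemma Ints_lt: "(z::real) \<in> \<int> \<Longrightarrow> z < k \<Longrightarrow> k \<in> \<int> \<Longrightarrow> z \<le> k - 1"
  using Ints_gt[of "-z" "-k"] by simp

lemma Lambda_cases: "v \<in> Lambda_E8 \<Longrightarrow> (\<forall>i. v $ i \<in> \<int>) \<or> (\<forall>i. v $ i - 1/2 \<in> \<int>)"
  by (simp add: Lambda_E8_def)

lemma sumsq: "v \<bullet> v = (\<Sum>i\<in>UNIV. v$i * v$i)" by (simp add: inner_vec_def)

lemma pair_Ints: "(\<forall>i. (v::real^8) $ i \<in> \<int>) \<or> (\<forall>i. v $ i - 1/2 \<in> \<int>) \<Longrightarrow> v$i + v$j \<in> \<int>"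
proof (elim disjE)
  assume "\<forall>i. v $ i - 1/2 \<in> \<int>"
  then have "(v$i - 1/2) + (v$j - 1/2) + 1 \<in> \<int>" by (intro Ints_add) auto
  then show ?thesis by simp
qed (auto intro: Ints_add)

lemma sq2: "2*((a::real)*a+b*b) \<ge> (a+b)*(a+b)"
proof -
  have "(a-b)*(a-b) \<ge> 0" by simp
  then show ?thesis by (simp add: algebra_simps)
qed

lemma sq_ge: "(x::real) \<ge> y \<Longrightarrow> y \<ge> 0 \<Longrightarrow> x*x \<ge> y*x"
  by (simp add: mult_right_mono)
lemma sq_le: "(x::real) \<le> y \<Longrightarrow> y \<le> 0 \<Longrightarrow> x*x \<ge> y*x"
  by (simp add: mult_right_mono_neg)

lemma sq_le_quarter: "(a::real)*a \<le> 1/4 \<Longrightarrow> -1/2 \<le> a \<and> a \<le> 1/2"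
proof (rule ccontr)
  assume h: "a*a \<le> 1/4" "\<not> (-1/2 \<le> a \<and> a \<le> 1/2)"
  then have "1/2 < \<bar>a\<bar>" by auto
  then have "1/2 * (1/2) < \<bar>a\<bar> * \<bar>a\<bar>" by (intro mult_strict_mono) auto
  then show False using h(1) by (simp add: abs_mult[symmetric])
qed
lemma RE7_bound: assumes d: "d \<in> R_E7" and ij: "i \<noteq> j"
  shows "d$i + d$j \<le> 1 \<and> -1 \<le> d$i + d$j"
proof -
  have L: "d \<in> Lambda_E8" and n: "(\<Sum>k\<in>UNIV. d$k * d$k) = 2" and s: "(\<Sum>k\<in>UNIV. d$k) = 0"
    using d by (auto simp: R_E7_def R_E8_def sumsq inner_rho)
  have Z: "d$i + d$j \<in> \<int>" using pair_Ints Lambda_cases[OF L] .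
  have Q: "2*(d$i*d$i+d$j*d$j) \<ge> (d$i+d$j)*(d$i+d$j)" by (rule sq2)
  from Lambda_cases[OF L] show ?thesis
  proof
    assume I: "\<forall>k. d$k \<in> \<int>"
    have f: "(\<Sum>k\<in>UNIV. d$k*d$k + d$k) = 2" using n s by (simp add: sum.distrib)
    have g: "(\<Sum>k\<in>UNIV. d$k*d$k - d$k) = 2" using n s by (simp add: sum_subtractf)
    have f2: "(d$i*d$i + d$i) + (d$j*d$j + d$j) \<le> 2"
      using two_le_sum[of "\<lambda>k. d$k*d$k + d$k", OF _ ij] f I Ints_sq_plus by auto
    have g2: "(d$i*d$i - d$i) + (d$j*d$j - d$j) \<le> 2"
      using two_le_sum[of "\<lambda>k. d$k*d$k - d$k", OF _ ij] g I Ints_sq_minus by auto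
    have A: "d$i + d$j \<le> 1"
    proof (rule ccontr)
      assume "\<not> ?thesis" then have "d$i + d$j \<ge> 2" using Ints_gt[OF Z, of 1] by auto
      then have C: "2 \<le> d$i + d$j" by auto
      have "2 * d$i + 2 * d$j \<le> (d$i+d$j)*(d$i+d$j)" using sq_ge[OF C] by (simp add: distrib_left)
      then show False using f2 Q C by (linarith | smt (verit) | simp add: algebra_simps)
    qed
    have B: "-1 \<le> d$i + d$j"
    proof (rule ccontr)
      assume "\<not> ?thesis" then have "d$i + d$j \<le> -2" using Ints_lt[OF Z, of "-1"] by auto
      then have C: "d$i + d$j \<le> -2" by auto
      have "-2 * d$i + -2 * d$j \<le> (d$i+d$j)*(d$i+d$j)" using sq_le[OF C] by (simp add: distrib_left)
      then show False using g2 Q C by (linarith | smt (verit) | simp add: algebra_simps)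
    qed
    show ?thesis using A B by simp
  next
    assume H: "\<forall>k. d$k - 1/2 \<in> \<int>"
    have h: "(\<Sum>k\<in>UNIV. d$k*d$k - 1/4) = 0" using n by (simp add: sum_subtractf)
    have hk: "d$k*d$k - 1/4 \<le> 0" for k
      using one_le_sum[of "\<lambda>k. d$k*d$k - 1/4" k] h H half_sq by auto
    show ?thesis using sq_le_quarter[of "d$i"] sq_le_quarter[of "d$j"] hk[of i] hk[of j] by auto
  qed
qed

lemma mu_bound: assumes L: "m \<in> Lambda_E8" and r: "m \<bullet> rho = 1" and mm: "m \<bullet> m = 4" and ij: "i \<noteq> j"
  shows "m$i + m$j \<le> 2 \<and> -1 \<le> m$i + m$j"
proof -
  have n: "(\<Sum>k\<in>UNIV. m$k * m$k) = 4" and s: "(\<Sum>k\<in>UNIV. m$k) = 2"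
    using r mm by (auto simp: sumsq inner_rho)
  have Z: "m$i + m$j \<in> \<int>" using pair_Ints Lambda_cases[OF L] .
  have Q: "2*(m$i*m$i+m$j*m$j) \<ge> (m$i+m$j)*(m$i+m$j)" by (rule sq2)
  from Lambda_cases[OF L] show ?thesis
  proof
    assume I: "\<forall>k. m$k \<in> \<int>"
    have f: "(\<Sum>k\<in>UNIV. m$k*m$k + m$k) = 6" using n s by (simp add: sum.distrib)
    have g: "(\<Sum>k\<in>UNIV. m$k*m$k - m$k) = 2" using n s by (simp add: sum_subtractf)
    have f2: "(m$i*m$i + m$i) + (m$j*m$j + m$j) \<le> 6"
      using two_le_sum[of "\<lambda>k. m$k*m$k + m$k", OF _ ij] f I Ints_sq_plus by auto
    have g2: "(m$i*m$i - m$i) + (m$j*m$j - m$j) \<le> 2"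
      using two_le_sum[of "\<lambda>k. m$k*m$k - m$k", OF _ ij] g I Ints_sq_minus by auto
    have A: "m$i + m$j \<le> 2"
    proof (rule ccontr)
      assume "\<not> ?thesis" then have "m$i + m$j \<ge> 3" using Ints_gt[OF Z, of 2] by auto
      then have C: "3 \<le> m$i + m$j" by auto
      have "3 * m$i + 3 * m$j \<le> (m$i+m$j)*(m$i+m$j)" using sq_ge[OF C] by (simp add: distrib_left)
      then show False using f2 Q C by (linarith | smt (verit) | simp add: algebra_simps)
    qed
    have B: "-1 \<le> m$i + m$j"
    proof (rule ccontr)
      assume "\<not> ?thesis" then have "m$i + m$j \<le> -2" using Ints_lt[OF Z, of "-1"] by auto
      then have C: "m$i + m$j \<le> -2" by auto
      have "-2 * m$i + -2 * m$j \<le> (m$i+m$j)*(m$i+m$j)" using sq_le[OF C] by (simp add: distrib_left)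
      then show False using g2 Q C by (linarith | smt (verit) | simp add: algebra_simps)
    qed
    show ?thesis using A B by simp
  next
    assume H: "\<forall>k. m$k - 1/2 \<in> \<int>"
    have h: "(\<Sum>k\<in>UNIV. m$k*m$k - 1/4) = 2" using n by (simp add: sum_subtractf)
    have h2: "(m$i*m$i - 1/4) + (m$j*m$j - 1/4) \<le> 2"
      using two_le_sum[of "\<lambda>k. m$k*m$k - 1/4", OF _ ij] h H half_sq by auto
    have q: "(\<Sum>k\<in>UNIV. m$k*m$k - m$k + 1/4) = 4" using n s by (simp add: sum.distrib sum_subtractf)
    have q0: "m$k*m$k - m$k + 1/4 \<ge> 0" for k
    proof -
      have "(m$k - 1/2)*(m$k - 1/2) \<ge> 0" by simp
      then show ?thesis by (simp add: algebra_simps)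
    qed
    have q2: "(m$i*m$i - m$i + 1/4) + (m$j*m$j - m$j + 1/4) \<le> 4"
      using two_le_sum[of "\<lambda>k. m$k*m$k - m$k + 1/4", OF _ ij] q q0 by auto
    have A: "m$i + m$j \<le> 2"
    proof (rule ccontr)
      assume "\<not> ?thesis" then have "m$i + m$j \<ge> 3" using Ints_gt[OF Z, of 2] by auto
      then have C: "3 \<le> m$i + m$j" by auto
      have "3 * m$i + 3 * m$j \<le> (m$i+m$j)*(m$i+m$j)" using sq_ge[OF C] by (simp add: distrib_left)
      then show False using h2 Q C by (linarith | smt (verit) | simp add: algebra_simps)
    qed
    have B: "-1 \<le> m$i + m$j"
    proof (rule ccontr)
      assume "\<not> ?thesis" then have "m$i + m$j \<le> -2" using Ints_lt[OF Z, of "-1"] by auto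
      then have C: "m$i + m$j \<le> -2" by auto
      have "-2 * m$i + -2 * m$j \<le> (m$i+m$j)*(m$i+m$j)" using sq_le[OF C] by (simp add: distrib_left)
      then show False using q2 Q C by (linarith | smt (verit) | simp add: algebra_simps)
    qed
    show ?thesis using A B by simp
  qed
qed


definition Mset :: "(real^8) set" where
  "Mset = {\<mu>\<in>Lambda_E8. \<mu> \<bullet> rho = 1 \<and> \<mu> \<bullet> \<mu> = 4}"

definition Qset :: "(real^8) set" where
  "Qset = {\<alpha>. \<alpha> \<bullet> rho = 1 \<and> (\<forall>\<delta>\<in>R_E7. \<alpha> \<bullet> \<delta> \<le> 1) \<and>
                (\<forall>\<mu>\<in>Lambda_E8. \<mu> \<bullet> rho = 1 \<and> \<mu> \<bullet> \<mu> = 4 \<longrightarrow> \<alpha> \<bullet> \<mu> \<le> 2)}"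

definition Vset :: "(real^8) set" where
  "Vset = {axis i 1 + axis j 1 | i j :: 8. i < j} \<union> {rho - axis i 1 - axis j 1 | i j :: 8. i < j}"

lemma P1_Vset: "P1 = convex hull Vset" by (simp add: P1_def Vset_def)

lemma axis_inner[simp]: "axis i 1 \<bullet> x = x $ i"
  by (simp add: inner_commute[of "axis i 1"] inner_axis)
lemma inner_axis1[simp]: "x \<bullet> axis i 1 = x $ i"
  by (simp add: inner_axis)

lemma Qset_alt: "Qset = {\<alpha>. rho \<bullet> \<alpha> = 1} \<inter> (\<Inter>\<delta>\<in>R_E7. {\<alpha>. \<delta> \<bullet> \<alpha> \<le> 1}) \<inter> (\<Inter>\<mu>\<in>Mset. {\<alpha>. \<mu> \<bullet> \<alpha> \<le> 2})"
  by (auto simp: Qset_def Mset_def inner_commute)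

lemma convex_Qset: "convex Qset"
  unfolding Qset_alt
  by (intro convex_Int convex_INT convex_hyperplane convex_halfspace_le)

lemma RE7_rho: "\<delta> \<in> R_E7 \<Longrightarrow> rho \<bullet> \<delta> = 0"
  by (simp add: R_E7_def inner_commute)

lemma Vset_Q: "Vset \<subseteq> Qset"
proof
  fix v assume "v \<in> Vset"
  then obtain i j where ij: "i < j" and v: "v = axis i 1 + axis j 1 \<or> v = rho - axis i 1 - axis j 1"
    unfolding Vset_def by blast
  have ne: "i \<noteq> j" using ij by simp
  show "v \<in> Qset"
    unfolding Qset_def
  proof (intro CollectI conjI ballI impI)
    show "v \<bullet> rho = 1" using v by (auto simp: inner_diff_left inner_add_left rho_rho)
  next
    fix \<delta> assume d: "\<delta> \<in> R_E7"
    show "v \<bullet> \<delta> \<le> 1" using v RE7_bound[OF d ne] RE7_rho[OF d]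
      by (auto simp: inner_diff_left inner_add_left)
  next
    fix \<mu> assume "\<mu> \<in> Lambda_E8" "\<mu> \<bullet> rho = 1 \<and> \<mu> \<bullet> \<mu> = 4"
    then have b: "\<mu>$i + \<mu>$j \<le> 2 \<and> -1 \<le> \<mu>$i + \<mu>$j" and r: "rho \<bullet> \<mu> = 1"
      using mu_bound[OF _ _ _ ne] by (auto simp: inner_commute)
    show "v \<bullet> \<mu> \<le> 2" using v b r
      by (auto simp: inner_diff_left inner_add_left)
  qed
qed

lemma P1_sub_Q: "P1 \<subseteq> Qset"
  unfolding P1_Vset by (rule hull_minimal[of _ _ convex, OF Vset_Q convex_Qset])


lemma sum_max8:
  fixes a0 a1 a2 a3 a4 a5 a6 a7 c B :: real
  assumes S: "a0\<ge>a1" "a1\<ge>a2" "a2\<ge>a3" "a3\<ge>a4" "a4\<ge>a5" "a5\<ge>a6" "a6\<ge>a7"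
  and K: "0 \<le> B" "(a0 - c) \<le> B" "(a0 - c) + (a1 - c) \<le> B" "(a0 - c) + (a1 - c) + (a2 - c) \<le> B" "(a0 - c) + (a1 - c) + (a2 - c) + (a3 - c) \<le> B" "(a0 - c) + (a1 - c) + (a2 - c) + (a3 - c) + (a4 - c) \<le> B" "(a0 - c) + (a1 - c) + (a2 - c) + (a3 - c) + (a4 - c) + (a5 - c) \<le> B" "(a0 - c) + (a1 - c) + (a2 - c) + (a3 - c) + (a4 - c) + (a5 - c) + (a6 - c) \<le> B" "(a0 - c) + (a1 - c) + (a2 - c) + (a3 - c) + (a4 - c) + (a5 - c) + (a6 - c) + (a7 - c) \<le> B"
  shows "max 0 (a0 - c) + max 0 (a1 - c) + max 0 (a2 - c) + max 0 (a3 - c) + max 0 (a4 - c) + max 0 (a5 - c) + max 0 (a6 - c) + max 0 (a7 - c) \<le> B"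
proof -
  have "(a0 \<le> c) \<or> (c < a0 \<and> a1 \<le> c) \<or> (c < a1 \<and> a2 \<le> c) \<or> (c < a2 \<and> a3 \<le> c) \<or> (c < a3 \<and> a4 \<le> c) \<or> (c < a4 \<and> a5 \<le> c) \<or> (c < a5 \<and> a6 \<le> c) \<or> (c < a6 \<and> a7 \<le> c) \<or> (c < a7)" using S by linarith
  then show ?thesis
  proof (elim disjE conjE)
    assume C: "a0 \<le> c"
    have "max 0 (a0 - c) = 0" "max 0 (a1 - c) = 0" "max 0 (a2 - c) = 0" "max 0 (a3 - c) = 0" "max 0 (a4 - c) = 0" "max 0 (a5 - c) = 0" "max 0 (a6 - c) = 0" "max 0 (a7 - c) = 0" using S C by (auto simp: max_def)
    then show ?thesis using K(1) by simp
  next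
    assume C: "c < a0" "a1 \<le> c"
    have "max 0 (a0 - c) = a0 - c" "max 0 (a1 - c) = 0" "max 0 (a2 - c) = 0" "max 0 (a3 - c) = 0" "max 0 (a4 - c) = 0" "max 0 (a5 - c) = 0" "max 0 (a6 - c) = 0" "max 0 (a7 - c) = 0" using S C by (auto simp: max_def)
    then show ?thesis using K(2) by simp
  next
    assume C: "c < a1" "a2 \<le> c"
    have "max 0 (a0 - c) = a0 - c" "max 0 (a1 - c) = a1 - c" "max 0 (a2 - c) = 0" "max 0 (a3 - c) = 0" "max 0 (a4 - c) = 0" "max 0 (a5 - c) = 0" "max 0 (a6 - c) = 0" "max 0 (a7 - c) = 0" using S C by (auto simp: max_def)
    then show ?thesis using K(3) by simp
  next
    assume C: "c < a2" "a3 \<le> c"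
    have "max 0 (a0 - c) = a0 - c" "max 0 (a1 - c) = a1 - c" "max 0 (a2 - c) = a2 - c" "max 0 (a3 - c) = 0" "max 0 (a4 - c) = 0" "max 0 (a5 - c) = 0" "max 0 (a6 - c) = 0" "max 0 (a7 - c) = 0" using S C by (auto simp: max_def)
    then show ?thesis using K(4) by simp
  next
    assume C: "c < a3" "a4 \<le> c"
    have "max 0 (a0 - c) = a0 - c" "max 0 (a1 - c) = a1 - c" "max 0 (a2 - c) = a2 - c" "max 0 (a3 - c) = a3 - c" "max 0 (a4 - c) = 0" "max 0 (a5 - c) = 0" "max 0 (a6 - c) = 0" "max 0 (a7 - c) = 0" using S C by (auto simp: max_def)
    then show ?thesis using K(5) by simp
  next
    assume C: "c < a4" "a5 \<le> c"
    have "max 0 (a0 - c) = a0 - c" "max 0 (a1 - c) = a1 - c" "max 0 (a2 - c) = a2 - c" "max 0 (a3 - c) = a3 - c" "max 0 (a4 - c) = a4 - c" "max 0 (a5 - c) = 0" "max 0 (a6 - c) = 0" "max 0 (a7 - c) = 0" using S C by (auto simp: max_def)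
    then show ?thesis using K(6) by simp
  next
    assume C: "c < a5" "a6 \<le> c"
    have "max 0 (a0 - c) = a0 - c" "max 0 (a1 - c) = a1 - c" "max 0 (a2 - c) = a2 - c" "max 0 (a3 - c) = a3 - c" "max 0 (a4 - c) = a4 - c" "max 0 (a5 - c) = a5 - c" "max 0 (a6 - c) = 0" "max 0 (a7 - c) = 0" using S C by (auto simp: max_def)
    then show ?thesis using K(7) by simp
  next
    assume C: "c < a6" "a7 \<le> c"
    have "max 0 (a0 - c) = a0 - c" "max 0 (a1 - c) = a1 - c" "max 0 (a2 - c) = a2 - c" "max 0 (a3 - c) = a3 - c" "max 0 (a4 - c) = a4 - c" "max 0 (a5 - c) = a5 - c" "max 0 (a6 - c) = a6 - c" "max 0 (a7 - c) = 0" using S C by (auto simp: max_def)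
    then show ?thesis using K(8) by simp
  next
    assume C: "c < a7"
    have "max 0 (a0 - c) = a0 - c" "max 0 (a1 - c) = a1 - c" "max 0 (a2 - c) = a2 - c" "max 0 (a3 - c) = a3 - c" "max 0 (a4 - c) = a4 - c" "max 0 (a5 - c) = a5 - c" "max 0 (a6 - c) = a6 - c" "max 0 (a7 - c) = a7 - c" using S C by (auto simp: max_def)
    then show ?thesis using K(9) by simp
  qed
qed

lemma sum_min8:
  fixes a0 a1 a2 a3 a4 a5 a6 a7 c d B :: real
  assumes S: "a0\<ge>a1" "a1\<ge>a2" "a2\<ge>a3" "a3\<ge>a4" "a4\<ge>a5" "a5\<ge>a6" "a6\<ge>a7"
  and K: "B \<le> (a0 + c) + (a1 + c) + (a2 + c) + (a3 + c) + (a4 + c) + (a5 + c) + (a6 + c) + (a7 + c)" "B \<le> d + (a1 + c) + (a2 + c) + (a3 + c) + (a4 + c) + (a5 + c) + (a6 + c) + (a7 + c)" "B \<le> d + d + (a2 + c) + (a3 + c) + (a4 + c) + (a5 + c) + (a6 + c) + (a7 + c)" "B \<le> d + d + d + (a3 + c) + (a4 + c) + (a5 + c) + (a6 + c) + (a7 + c)" "B \<le> d + d + d + d + (a4 + c) + (a5 + c) + (a6 + c) + (a7 + c)" "B \<le> d + d + d + d + d + (a5 + c) + (a6 + c) + (a7 + c)" "B \<le> d + d + d + d + d + d + (a6 + c) + (a7 + c)" "B \<le> d + d + d + d + d + d + d + (a7 + c)" "B \<le> d + d + d + d + d + d + d + d"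
  shows "B \<le> min d (a0 + c) + min d (a1 + c) + min d (a2 + c) + min d (a3 + c) + min d (a4 + c) + min d (a5 + c) + min d (a6 + c) + min d (a7 + c)"
proof -
  have "(a0 + c < d) \<or> (d \<le> a0 + c \<and> a1 + c < d) \<or> (d \<le> a1 + c \<and> a2 + c < d) \<or> (d \<le> a2 + c \<and> a3 + c < d) \<or> (d \<le> a3 + c \<and> a4 + c < d) \<or> (d \<le> a4 + c \<and> a5 + c < d) \<or> (d \<le> a5 + c \<and> a6 + c < d) \<or> (d \<le> a6 + c \<and> a7 + c < d) \<or> (d \<le> a7 + c)" using S by linarith
  then show ?thesis
  proof (elim disjE conjE)
    assume C: "a0 + c < d"
    have "min d (a0 + c) = a0 + c" "min d (a1 + c) = a1 + c" "min d (a2 + c) = a2 + c" "min d (a3 + c) = a3 + c" "min d (a4 + c) = a4 + c" "min d (a5 + c) = a5 + c" "min d (a6 + c) = a6 + c" "min d (a7 + c) = a7 + c" using S C by (auto simp: min_def)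
    then show ?thesis using K(1) by simp
  next
    assume C: "d \<le> a0 + c" "a1 + c < d"
    have "min d (a0 + c) = d" "min d (a1 + c) = a1 + c" "min d (a2 + c) = a2 + c" "min d (a3 + c) = a3 + c" "min d (a4 + c) = a4 + c" "min d (a5 + c) = a5 + c" "min d (a6 + c) = a6 + c" "min d (a7 + c) = a7 + c" using S C by (auto simp: min_def)
    then show ?thesis using K(2) by simp
  next
    assume C: "d \<le> a1 + c" "a2 + c < d"
    have "min d (a0 + c) = d" "min d (a1 + c) = d" "min d (a2 + c) = a2 + c" "min d (a3 + c) = a3 + c" "min d (a4 + c) = a4 + c" "min d (a5 + c) = a5 + c" "min d (a6 + c) = a6 + c" "min d (a7 + c) = a7 + c" using S C by (auto simp: min_def)
    then show ?thesis using K(3) by simp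
  next
    assume C: "d \<le> a2 + c" "a3 + c < d"
    have "min d (a0 + c) = d" "min d (a1 + c) = d" "min d (a2 + c) = d" "min d (a3 + c) = a3 + c" "min d (a4 + c) = a4 + c" "min d (a5 + c) = a5 + c" "min d (a6 + c) = a6 + c" "min d (a7 + c) = a7 + c" using S C by (auto simp: min_def)
    then show ?thesis using K(4) by simp
  next
    assume C: "d \<le> a3 + c" "a4 + c < d"
    have "min d (a0 + c) = d" "min d (a1 + c) = d" "min d (a2 + c) = d" "min d (a3 + c) = d" "min d (a4 + c) = a4 + c" "min d (a5 + c) = a5 + c" "min d (a6 + c) = a6 + c" "min d (a7 + c) = a7 + c" using S C by (auto simp: min_def)
    then show ?thesis using K(5) by simp
  next
    assume C: "d \<le> a4 + c" "a5 + c < d"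
    have "min d (a0 + c) = d" "min d (a1 + c) = d" "min d (a2 + c) = d" "min d (a3 + c) = d" "min d (a4 + c) = d" "min d (a5 + c) = a5 + c" "min d (a6 + c) = a6 + c" "min d (a7 + c) = a7 + c" using S C by (auto simp: min_def)
    then show ?thesis using K(6) by simp
  next
    assume C: "d \<le> a5 + c" "a6 + c < d"
    have "min d (a0 + c) = d" "min d (a1 + c) = d" "min d (a2 + c) = d" "min d (a3 + c) = d" "min d (a4 + c) = d" "min d (a5 + c) = d" "min d (a6 + c) = a6 + c" "min d (a7 + c) = a7 + c" using S C by (auto simp: min_def)
    then show ?thesis using K(7) by simp
  next
    assume C: "d \<le> a6 + c" "a7 + c < d"
    have "min d (a0 + c) = d" "min d (a1 + c) = d" "min d (a2 + c) = d" "min d (a3 + c) = d" "min d (a4 + c) = d" "min d (a5 + c) = d" "min d (a6 + c) = d" "min d (a7 + c) = a7 + c" using S C by (auto simp: min_def)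
    then show ?thesis using K(8) by simp
  next
    assume C: "d \<le> a7 + c"
    have "min d (a0 + c) = d" "min d (a1 + c) = d" "min d (a2 + c) = d" "min d (a3 + c) = d" "min d (a4 + c) = d" "min d (a5 + c) = d" "min d (a6 + c) = d" "min d (a7 + c) = d" using S C by (auto simp: min_def)
    then show ?thesis using K(9) by simp
  qed
qed


lemma sorted_core:
  fixes a0 a1 a2 a3 a4 a5 a6 a7 :: real
  assumes S: "a0\<ge>a1" "a1\<ge>a2" "a2\<ge>a3" "a3\<ge>a4" "a4\<ge>a5" "a5\<ge>a6" "a6\<ge>a7"
 and sum: "a0+a1+a2+a3+a4+a5+a6+a7 = 2"
 and H1: "a0 - a7 \<le> 1" and H2: "a0+a1+a2+a3 \<le> 2" and H3: "a0 \<le> 1" and H4: "a7 \<ge> -1/2"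
 and H5: "a0+a1+a2-a7 \<le> 2" and H6: "2*a0+a1+a2+a3+a4 \<le> 3"
 shows "\<exists>t. 0 \<le> t \<and> t \<le> 1 \<and> -t/2 \<le> a7 \<and> a0 \<le> 1 - t/2 \<and>
   max 0 (a0 - t/2) + max 0 (a1 - t/2) + max 0 (a2 - t/2) + max 0 (a3 - t/2) +
   max 0 (a4 - t/2) + max 0 (a5 - t/2) + max 0 (a6 - t/2) + max 0 (a7 - t/2) \<le> 2 - 2*t \<and>
   2 - 2*t \<le> min (1-t) (a0 + t/2) + min (1-t) (a1 + t/2) + min (1-t) (a2 + t/2) + min (1-t) (a3 + t/2) +
     min (1-t) (a4 + t/2) + min (1-t) (a5 + t/2) + min (1-t) (a6 + t/2) + min (1-t) (a7 + t/2)"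
proof -
  define t where "t = max (max (max (max 0 (-2*a7)) (2*a0+2*a1+2*a2+2*a3+2*a4-4)) (a0+a1+a2+a3+a4+a5-2)) (2/3*a0+2/3*a1+2/3*a2+2/3*a3+2/3*a4+2/3*a5+2/3*a6-4/3)"
  have L: "0 \<le> t" "-2*a7 \<le> t" "2*a0+2*a1+2*a2+2*a3+2*a4-4 \<le> t" "a0+a1+a2+a3+a4+a5-2 \<le> t"
    "2/3*a0+2/3*a1+2/3*a2+2/3*a3+2/3*a4+2/3*a5+2/3*a6-4/3 \<le> t" unfolding t_def by auto
  have U: "t \<le> 1" "t \<le> 2-2*a0" "t \<le> 4/3-2/3*a0" "t \<le> 2-a0-a1" "t \<le> 4-2*a0-2*a1-2*a2"
    unfolding t_def max.bounded_iff using assms by (intro conjI; (simp | smt (z3)))+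
  have KM0: "0 \<le> 2 - 2*t" using U(1) by linarith
  have KM1: "(a0 - t/2) \<le> 2 - 2*t" using U(3) by linarith
  have KM2: "(a0 - t/2) + (a1 - t/2) \<le> 2 - 2*t" using U(4) by linarith
  have KM3: "(a0 - t/2) + (a1 - t/2) + (a2 - t/2) \<le> 2 - 2*t" using U(5) by linarith
  have KM4: "(a0 - t/2) + (a1 - t/2) + (a2 - t/2) + (a3 - t/2) \<le> 2 - 2*t" using H2 by linarith
  have KM5: "(a0 - t/2) + (a1 - t/2) + (a2 - t/2) + (a3 - t/2) + (a4 - t/2) \<le> 2 - 2*t" using L(3) by linarith
  have KM6: "(a0 - t/2) + (a1 - t/2) + (a2 - t/2) + (a3 - t/2) + (a4 - t/2) + (a5 - t/2) \<le> 2 - 2*t" using L(4) by linarith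
  have KM7: "(a0 - t/2) + (a1 - t/2) + (a2 - t/2) + (a3 - t/2) + (a4 - t/2) + (a5 - t/2) + (a6 - t/2) \<le> 2 - 2*t" using L(5) sum by linarith
  have KM8: "(a0 - t/2) + (a1 - t/2) + (a2 - t/2) + (a3 - t/2) + (a4 - t/2) + (a5 - t/2) + (a6 - t/2) + (a7 - t/2) \<le> 2 - 2*t" using L(1) sum by linarith
  have KN0: "2 - 2*t \<le> (a0 + t/2) + (a1 + t/2) + (a2 + t/2) + (a3 + t/2) + (a4 + t/2) + (a5 + t/2) + (a6 + t/2) + (a7 + t/2)" using sum L(1) by linarith
  have KN1: "2 - 2*t \<le> (1-t) + (a1 + t/2) + (a2 + t/2) + (a3 + t/2) + (a4 + t/2) + (a5 + t/2) + (a6 + t/2) + (a7 + t/2)" using H3 L(1) sum by linarith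
  have KN2: "2 - 2*t \<le> (1-t) + (1-t) + (a2 + t/2) + (a3 + t/2) + (a4 + t/2) + (a5 + t/2) + (a6 + t/2) + (a7 + t/2)" using H3 S L(1) sum by linarith
  have KN3: "2 - 2*t \<le> (1-t) + (1-t) + (1-t) + (a3 + t/2) + (a4 + t/2) + (a5 + t/2) + (a6 + t/2) + (a7 + t/2)" using H3 S L(1) sum by linarith
  have KN4: "2 - 2*t \<le> (1-t) + (1-t) + (1-t) + (1-t) + (a4 + t/2) + (a5 + t/2) + (a6 + t/2) + (a7 + t/2)" using H3 S sum by linarith
  have KN5: "2 - 2*t \<le> (1-t) + (1-t) + (1-t) + (1-t) + (1-t) + (a5 + t/2) + (a6 + t/2) + (a7 + t/2)" using H4 S U(1) sum by linarith
  have KN6: "2 - 2*t \<le> (1-t) + (1-t) + (1-t) + (1-t) + (1-t) + (1-t) + (a6 + t/2) + (a7 + t/2)" using H4 S U(1) sum by linarith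
  have KN7: "2 - 2*t \<le> (1-t) + (1-t) + (1-t) + (1-t) + (1-t) + (1-t) + (1-t) + (a7 + t/2)" using H4 U(1) sum by linarith
  have KN8: "2 - 2*t \<le> (1-t) + (1-t) + (1-t) + (1-t) + (1-t) + (1-t) + (1-t) + (1-t)" using U(1) sum by linarith
  show ?thesis
  proof (intro exI conjI)
    show "0 \<le> t" "t \<le> 1" "-t/2 \<le> a7" "a0 \<le> 1 - t/2" using L U by auto
    show "max 0 (a0 - t/2) + max 0 (a1 - t/2) + max 0 (a2 - t/2) + max 0 (a3 - t/2) +
   max 0 (a4 - t/2) + max 0 (a5 - t/2) + max 0 (a6 - t/2) + max 0 (a7 - t/2) \<le> 2 - 2*t"
      by (rule sum_max8[OF S KM0 KM1 KM2 KM3 KM4 KM5 KM6 KM7 KM8])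
    show "2 - 2*t \<le> min (1-t) (a0 + t/2) + min (1-t) (a1 + t/2) + min (1-t) (a2 + t/2) + min (1-t) (a3 + t/2) +
     min (1-t) (a4 + t/2) + min (1-t) (a5 + t/2) + min (1-t) (a6 + t/2) + min (1-t) (a7 + t/2)"
      by (rule sum_min8[OF S KN0 KN1 KN2 KN3 KN4 KN5 KN6 KN7 KN8])
  qed
qed


definition HS :: "(real^8) set" where
  "HS = {x. (\<forall>i. 0 \<le> x$i \<and> x$i \<le> 1) \<and> x \<bullet> rho = 1}"

definition Evec :: "(real^8) set" where
  "Evec = {axis i 1 + axis j 1 | i j :: 8. i < j}"

lemma HS_alt: "HS = cbox 0 (\<chi> i. 1) \<inter> {x. rho \<bullet> x = 1}"
  by (auto simp: HS_def mem_box_cart inner_commute)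

lemma compact_HS: "compact HS"
  unfolding HS_alt by (intro compact_Int_closed compact_cbox closed_hyperplane)

lemma convex_HS: "convex HS"
  unfolding HS_alt by (intro convex_Int convex_box convex_hyperplane)

lemma Ints_between: "(z::real) \<in> \<int> \<Longrightarrow> 0 < z \<Longrightarrow> z < 1 \<Longrightarrow> False"
  using Ints_gt[of z 0] by auto

lemma HS_ext: assumes ext: "x extreme_point_of HS" shows "x \<in> Evec"
proof -
  have xHS: "x \<in> HS" using ext by (simp add: extreme_point_of_def)
  then have box: "\<And>i. 0 \<le> x$i \<and> x$i \<le> 1" and s: "(\<Sum>i\<in>UNIV. x$i) = 2"
    by (auto simp: HS_def inner_rho)
  have zo: "x$i = 0 \<or> x$i = 1" for i
  proof (rule ccontr)
    assume "\<not> (x$i = 0 \<or> x$i = 1)"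
    then have xi: "0 < x$i" "x$i < 1" using box[of i] by auto
    have "\<exists>j. j \<noteq> i \<and> 0 < x$j \<and> x$j < 1"
    proof (rule ccontr)
      assume nex: "\<not> ?thesis"
      have "x$j = 0 \<or> x$j = 1" if "j \<noteq> i" for j
      proof -
        have "\<not> (0 < x$j \<and> x$j < 1)" using nex that by blast
        then show ?thesis using box[of j] by (smt (verit))
      qed
      then have "\<forall>j. j \<noteq> i \<longrightarrow> x$j = 0 \<or> x$j = 1" by blast
      then have "(\<Sum>j\<in>UNIV-{i}. x$j) \<in> \<int>" by (intro Ints_sum) auto
      moreover have "(\<Sum>j\<in>UNIV. x$j) = x$i + (\<Sum>j\<in>UNIV-{i}. x$j)"
        by (simp add: sum.remove)
      ultimately have "x$i \<in> \<int>" using s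
        by (metis Ints_diff Ints_numeral add_diff_cancel_right')
      then show False using xi Ints_between by blast
    qed
    then obtain j where j: "j \<noteq> i" "0 < x$j" "x$j < 1" by blast
    define e where "e = min (min (x$i) (1 - x$i)) (min (x$j) (1 - x$j))"
    have e: "0 < e" "e \<le> x$i" "e \<le> 1 - x$i" "e \<le> x$j" "e \<le> 1 - x$j"
      using xi j unfolding e_def by auto
    define d where "d = e *\<^sub>R (axis i 1 - axis j 1 :: real^8)"
    have dn: "d$k = (if k = i then e else if k = j then -e else 0)" for k
      using j(1) by (auto simp: d_def axis_def)
    have drho: "d \<bullet> rho = 0" by (simp add: d_def inner_diff_left)
    have xr: "x \<bullet> rho = 1" using xHS by (simp add: HS_def)
    have "0 \<le> (x+d)$k \<and> (x+d)$k \<le> 1" for k using box[of k] e dn[of k] by auto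
    then have aHS: "x + d \<in> HS" using xr drho
      by (simp add: HS_def inner_add_left)
    have "0 \<le> (x-d)$k \<and> (x-d)$k \<le> 1" for k using box[of k] e dn[of k] by auto
    then have bHS: "x - d \<in> HS" using xr drho
      by (simp add: HS_def inner_diff_left)
    have ne: "x + d \<noteq> x - d"
    proof
      assume "x + d = x - d"
      then have "(x+d)$i = (x-d)$i" by (simp only:)
      then show False using dn[of i] e(1) by simp
    qed
    have "midpoint (x + d) (x - d) = x"
      by (simp add: midpoint_def vec_eq_iff)
    then have "x \<in> open_segment (x+d) (x-d)" using ne midpoint_in_open_segment by metis
    then show False using ext aHS bHS unfolding extreme_point_of_def by blast
  qed
  define A where "A = {k. x$k = 1}"
  have xA: "x$k = (if k \<in> A then 1 else 0)" for k using zo[of k] by (auto simp: A_def)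
  have "(\<Sum>k\<in>UNIV. x$k) = (\<Sum>k\<in>UNIV. if k \<in> A then 1 else 0)" by (simp add: xA)
  also have "\<dots> = real (card A)" by (simp add: sum.If_cases)
  finally have "card A = 2" using s by simp
  then obtain p q where pq: "A = {p,q}" "p \<noteq> q" by (auto simp: card_2_iff)
  have xpq: "x = axis p 1 + axis q 1"
    using pq by (auto simp: vec_eq_iff xA axis_def)
  show ?thesis
  proof (cases "p < q")
    case True then show ?thesis unfolding Evec_def xpq by blast
  next
    case False
    then have "q < p" using pq(2) by (simp add: neq_iff)
    have "x = axis q 1 + axis p 1" using xpq by (simp add: add.commute)
    then show ?thesis unfolding Evec_def using \<open>q < p\<close> by blast
  qed
qed

lemma HS_hull: "HS \<subseteq> convex hull Evec"
proof -
  have "HS = convex hull {x. x extreme_point_of HS}"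
    by (rule Krein_Milman_Minkowski[OF compact_HS convex_HS])
  also have "\<dots> \<subseteq> convex hull Evec" by (rule hull_mono) (auto intro: HS_ext)
  finally show ?thesis .
qed

lemma Evec_V: "Evec \<subseteq> Vset" by (auto simp: Evec_def Vset_def)

lemma convex_P1: "convex P1" by (simp add: P1_Vset convex_convex_hull)

lemma HS_P1: "a \<in> HS \<Longrightarrow> a \<in> P1"
  using HS_hull hull_mono[OF Evec_V] unfolding P1_Vset by blast

lemma HS_P1': "b \<in> HS \<Longrightarrow> rho - b \<in> P1"
proof -
  assume "b \<in> HS"
  then have "b \<in> convex hull Evec" using HS_hull by blast
  then have "rho + (-1) *\<^sub>R b \<in> (\<lambda>x. rho + (-1) *\<^sub>R x) ` (convex hull Evec)" by blast
  also have "\<dots> = convex hull ((\<lambda>x. rho + (-1) *\<^sub>R x) ` Evec)" by (rule convex_hull_affinity[symmetric])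
  also have "\<dots> \<subseteq> convex hull Vset"
  proof (rule hull_mono)
    show "(\<lambda>x. rho + (-1) *\<^sub>R x) ` Evec \<subseteq> Vset"
      by (auto simp: Evec_def Vset_def algebra_simps)
  qed
  finally show ?thesis by (simp add: P1_Vset)
qed

lemma comb_P1: assumes "0 \<le> t" "t \<le> 1" "a \<in> HS" "b \<in> HS"
  shows "(1-t) *\<^sub>R a + t *\<^sub>R (rho - b) \<in> P1"
  using convexD[OF convex_P1 HS_P1[OF assms(3)] HS_P1'[OF assms(4)]] assms(1,2) by simp

lemma axis_comp[simp]: "axis j (1::real) $ i = (if i = j then 1 else 0)"
  by (simp add: axis_def)


lemma construct:
  fixes \<alpha> :: "real^8" and t :: real
  assumes ar: "\<alpha> \<bullet> rho = 1" and t0: "0 \<le> t" and t1: "t \<le> 1"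
    and bx: "\<And>i. -t/2 \<le> \<alpha>$i \<and> \<alpha>$i \<le> 1 - t/2"
    and Sl: "(\<Sum>i\<in>UNIV. max 0 (\<alpha>$i - t/2)) \<le> 2 - 2*t"
    and Su: "2 - 2*t \<le> (\<Sum>i\<in>UNIV. min (1-t) (\<alpha>$i + t/2))"
  shows "\<alpha> \<in> P1"
proof -
  define l where "l i = max 0 (\<alpha>$i - t/2)" for i
  define u where "u i = min (1-t) (\<alpha>$i + t/2)" for i
  define SL where "SL = (\<Sum>i\<in>UNIV. l i)"
  define SU where "SU = (\<Sum>i\<in>UNIV. u i)"
  have lu: "l i \<le> u i" for i using bx[of i] t0 t1 by (auto simp: l_def u_def)
  have SLU: "SL \<le> 2 - 2*t" "2 - 2*t \<le> SU" using Sl Su by (simp_all add: SL_def SU_def l_def u_def)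
  define \<theta> where "\<theta> = (if SU = SL then 0 else (2 - 2*t - SL) / (SU - SL))"
  have th: "0 \<le> \<theta>" "\<theta> \<le> 1" using SLU by (auto simp: \<theta>_def divide_le_eq_1)
  have thS: "SL + \<theta> * (SU - SL) = 2 - 2*t" using SLU by (auto simp: \<theta>_def)
  define x where "x = (\<chi> i. l i + \<theta> * (u i - l i))"
  define y where "y = (\<chi> i. x$i - (\<alpha>$i - t/2))"
  have xl: "l i \<le> x$i" for i using lu[of i] th by (simp add: x_def)
  have xu: "x$i \<le> u i" for i
  proof -
    have "\<theta> * (u i - l i) \<le> 1 * (u i - l i)" using lu[of i] th by (intro mult_right_mono) auto
    then show ?thesis by (simp add: x_def)
  qed
  have xb: "0 \<le> x$i" "x$i \<le> 1 - t" for i using xl[of i] xu[of i] by (auto simp: l_def u_def)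
  have yb: "0 \<le> y$i" "y$i \<le> t" for i using xl[of i] xu[of i] by (auto simp: y_def l_def u_def)
  have sa: "(\<Sum>i\<in>UNIV. \<alpha>$i) = 2" using ar by (simp add: inner_rho)
  have sx: "(\<Sum>i\<in>UNIV. x$i) = 2 - 2*t"
  proof -
    have "(\<Sum>i\<in>UNIV. x$i) = SL + \<theta> * (SU - SL)"
      by (simp add: x_def SL_def SU_def sum.distrib sum_distrib_left sum_subtractf algebra_simps)
    then show ?thesis using thS by simp
  qed
  have sy: "(\<Sum>i\<in>UNIV. y$i) = 2 * t"
  proof -
    have "(\<Sum>i\<in>UNIV. y$i) = (\<Sum>i\<in>UNIV. x$i) - (\<Sum>i\<in>UNIV. \<alpha>$i) + (\<Sum>i\<in>(UNIV::8 set). t/2)"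
      by (simp add: y_def sum_subtractf sum.distrib)
    then show ?thesis using sx sa by simp
  qed
  define e01 where "e01 = (axis 0 1 + axis 1 1 :: real^8)"
  have "e01 \<bullet> rho = 1" by (simp add: e01_def inner_add_left)
  moreover have "0 \<le> e01$i \<and> e01$i \<le> 1" for i by (simp add: e01_def axis_def)
  ultimately have e01: "e01 \<in> HS" by (simp add: HS_def)
  define a where "a = (if t < 1 then (1/(1-t)) *\<^sub>R x else e01)"
  define b where "b = (if 0 < t then (1/t) *\<^sub>R y else e01)"
  have aHS: "a \<in> HS"
  proof (cases "t < 1")
    case True
    then have "0 \<le> x$i / (1-t) \<and> x$i / (1-t) \<le> 1" for i using xb[of i] by auto
    moreover have "(\<Sum>i\<in>UNIV. x$i / (1-t)) = 2" using sx True
      by (simp add: sum_divide_distrib[symmetric] field_simps)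
    ultimately show ?thesis using True by (simp add: a_def HS_def inner_rho)
  qed (simp add: a_def e01)
  have bHS: "b \<in> HS"
  proof (cases "0 < t")
    case True
    then have "0 \<le> y$i / t \<and> y$i / t \<le> 1" for i using yb[of i] by auto
    moreover have "(\<Sum>i\<in>UNIV. y$i / t) = 2" using sy True
      by (simp add: sum_divide_distrib[symmetric])
    ultimately show ?thesis using True by (simp add: b_def HS_def inner_rho)
  qed (simp add: b_def e01)
  have eq: "\<alpha> = (1-t) *\<^sub>R a + t *\<^sub>R (rho - b)"
  proof (subst vec_eq_iff, intro allI)
    fix i
    have yi: "y$i = x$i - \<alpha>$i + t/2" by (simp add: y_def)
    show "\<alpha>$i = ((1-t) *\<^sub>R a + t *\<^sub>R (rho - b))$i"
    proof (cases "t = 0")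
      case True
      then have "y$i = 0" using yb[of i] by simp
      then show ?thesis using True yi by (simp add: a_def b_def)
    next
      case False
      then have tp: "0 < t" using t0 by simp
      show ?thesis
      proof (cases "t = 1")
        case True
        then have "x$i = 0" using xb[of i] by simp
        then show ?thesis using True yi by (simp add: a_def b_def)
      next
        case False
        then have "t < 1" using t1 by simp
        then show ?thesis using tp yi by (simp add: a_def b_def field_simps)
      qed
    qed
  qed
  show ?thesis unfolding eq by (rule comb_P1[OF t0 t1 aHS bHS])
qed



lemma RE7_I: "(\<forall>k. v$k \<in> \<int>) \<or> (\<forall>k. v$k - 1/2 \<in> \<int>) \<Longrightarrow> v \<bullet> v = 2 \<Longrightarrow> v \<bullet> rho = 0 \<Longrightarrow> v \<in> R_E7"
  by (simp add: R_E7_def R_E8_def Lambda_E8_def)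

lemma M_I: "(\<forall>k. v$k \<in> \<int>) \<or> (\<forall>k. v$k - 1/2 \<in> \<int>) \<Longrightarrow> v \<bullet> v = 4 \<Longrightarrow> v \<bullet> rho = 1 \<Longrightarrow>
   v \<in> Lambda_E8 \<and> v \<bullet> rho = 1 \<and> v \<bullet> v = 4"
  by (simp add: Lambda_E8_def)

lemma ax_Int: "axis j (1::real) $ i \<in> \<int>" by simp

lemma Q_sub_P1: "Qset \<subseteq> P1"
proof
  fix \<alpha> assume aQ: "\<alpha> \<in> Qset"
  have ar: "\<alpha> \<bullet> rho = 1" and QD: "\<And>\<delta>. \<delta> \<in> R_E7 \<Longrightarrow> \<alpha> \<bullet> \<delta> \<le> 1"
    and QM: "\<And>\<mu>. \<mu> \<in> Lambda_E8 \<and> \<mu> \<bullet> rho = 1 \<and> \<mu> \<bullet> \<mu> = 4 \<Longrightarrow> \<alpha> \<bullet> \<mu> \<le> 2"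
    using aQ by (auto simp: Qset_def)
  define xs where "xs = sort_key (\<lambda>i. - \<alpha>$i) (sorted_list_of_set (UNIV::8 set))"
  have dxs: "distinct xs" and sxs: "set xs = UNIV" and srt: "sorted (map (\<lambda>i. - \<alpha>$i) xs)"
    by (simp_all add: xs_def sorted_sort_key)
  have len: "length xs = 8" using distinct_card[OF dxs] sxs by simp
  obtain p0 p1 p2 p3 p4 p5 p6 p7 where xsp: "xs = [p0,p1,p2,p3,p4,p5,p6,p7]"
    using len by (auto simp: length_Suc_conv numeral_eq_Suc)
  have D: "p0 \<noteq> p1" "p0 \<noteq> p2" "p0 \<noteq> p3" "p0 \<noteq> p4" "p0 \<noteq> p5" "p0 \<noteq> p6" "p0 \<noteq> p7"
    "p1 \<noteq> p2" "p1 \<noteq> p3" "p1 \<noteq> p4" "p1 \<noteq> p5" "p1 \<noteq> p6" "p1 \<noteq> p7"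
    "p2 \<noteq> p3" "p2 \<noteq> p4" "p2 \<noteq> p5" "p2 \<noteq> p6" "p2 \<noteq> p7"
    "p3 \<noteq> p4" "p3 \<noteq> p5" "p3 \<noteq> p6" "p3 \<noteq> p7"
    "p4 \<noteq> p5" "p4 \<noteq> p6" "p4 \<noteq> p7" "p5 \<noteq> p6" "p5 \<noteq> p7" "p6 \<noteq> p7"
    using dxs unfolding xsp by auto
  note D' = D[symmetric]
  have S: "\<alpha>$p0 \<ge> \<alpha>$p1" "\<alpha>$p1 \<ge> \<alpha>$p2" "\<alpha>$p2 \<ge> \<alpha>$p3" "\<alpha>$p3 \<ge> \<alpha>$p4"
    "\<alpha>$p4 \<ge> \<alpha>$p5" "\<alpha>$p5 \<ge> \<alpha>$p6" "\<alpha>$p6 \<ge> \<alpha>$p7"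
    using srt unfolding xsp by auto
  have sumL: "(\<Sum>i\<in>UNIV. g i) = g p0 + g p1 + g p2 + g p3 + g p4 + g p5 + g p6 + g p7" for g :: "8 \<Rightarrow> real"
  proof -
    have "(\<Sum>i\<in>UNIV. g i) = (\<Sum>i\<in>set xs. g i)" using sxs by simp
    also have "\<dots> = sum_list (map g xs)" by (rule sum.distinct_set_conv_list[OF dxs])
    finally show ?thesis unfolding xsp by (simp add: add.assoc)
  qed
  have allp: "i = p0 \<or> i = p1 \<or> i = p2 \<or> i = p3 \<or> i = p4 \<or> i = p5 \<or> i = p6 \<or> i = p7" for i
  proof -
    have "i \<in> set xs" using sxs by simp
    then show ?thesis unfolding xsp by simp
  qed
  have sum: "\<alpha>$p0+\<alpha>$p1+\<alpha>$p2+\<alpha>$p3+\<alpha>$p4+\<alpha>$p5+\<alpha>$p6+\<alpha>$p7 = 2"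
    using ar by (simp add: inner_rho sumL)
  note ips = inner_add_left inner_add_right inner_diff_left inner_diff_right inner_scaleR_left inner_scaleR_right
    rho_rho D D'
  have H1: "\<alpha>$p0 - \<alpha>$p7 \<le> 1"
  proof -
    let ?v = "axis p0 1 - axis p7 1 :: real^8"
    have "?v \<in> R_E7" by (rule RE7_I) (simp_all add: ips)
    from QD[OF this] show ?thesis by (simp add: ips)
  qed
  have H2: "\<alpha>$p0+\<alpha>$p1+\<alpha>$p2+\<alpha>$p3 \<le> 2"
  proof -
    let ?v = "axis p0 1 + axis p1 1 + axis p2 1 + axis p3 1 - rho :: real^8"
    have "\<forall>k. ?v$k - 1/2 \<in> \<int>"
    proof
      fix k
      have "?v$k - 1/2 = axis p0 1 $ k + axis p1 1 $ k + axis p2 1 $ k + axis p3 1 $ k - 1" by simp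
      also have "\<dots> \<in> \<int>" by (intro Ints_add Ints_diff ax_Int Ints_1)
      finally show "?v$k - 1/2 \<in> \<int>" .
    qed
    then have "?v \<in> R_E7" by (intro RE7_I) (simp_all add: ips)
    from QD[OF this] show ?thesis using ar by (simp add: ips)
  qed
  have H3: "\<alpha>$p0 \<le> 1"
  proof -
    let ?v = "2 *\<^sub>R axis p0 1 :: real^8"
    have "\<forall>k. ?v$k \<in> \<int>" by simp
    then have "?v \<in> Lambda_E8 \<and> ?v \<bullet> rho = 1 \<and> ?v \<bullet> ?v = 4" by (intro M_I) (simp_all add: ips)
    from QM[OF this] show ?thesis by (simp add: ips)
  qed
  have H4: "\<alpha>$p7 \<ge> -1/2"
  proof -
    let ?v = "rho - 2 *\<^sub>R axis p7 1 :: real^8"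
    have "\<forall>k. ?v$k - 1/2 \<in> \<int>"
    proof
      fix k
      have "?v$k - 1/2 = - (2 * axis p7 1 $ k)" by simp
      also have "\<dots> \<in> \<int>" by (intro Ints_minus Ints_mult ax_Int) simp
      finally show "?v$k - 1/2 \<in> \<int>" .
    qed
    then have "?v \<in> Lambda_E8 \<and> ?v \<bullet> rho = 1 \<and> ?v \<bullet> ?v = 4" by (intro M_I) (simp_all add: ips)
    from QM[OF this] show ?thesis using ar by (simp add: ips)
  qed
  have H5: "\<alpha>$p0+\<alpha>$p1+\<alpha>$p2-\<alpha>$p7 \<le> 2"
  proof -
    let ?v = "axis p0 1 + axis p1 1 + axis p2 1 - axis p7 1 :: real^8"
    have "\<forall>k. ?v$k \<in> \<int>"
    proof
      fix k
      have "?v$k = axis p0 1 $ k + axis p1 1 $ k + axis p2 1 $ k - axis p7 1 $ k" by simp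
      also have "\<dots> \<in> \<int>" by (intro Ints_add Ints_diff ax_Int)
      finally show "?v$k \<in> \<int>" .
    qed
    then have "?v \<in> Lambda_E8 \<and> ?v \<bullet> rho = 1 \<and> ?v \<bullet> ?v = 4" by (intro M_I) (simp_all add: ips)
    from QM[OF this] show ?thesis by (simp add: ips)
  qed
  have H6: "2*\<alpha>$p0+\<alpha>$p1+\<alpha>$p2+\<alpha>$p3+\<alpha>$p4 \<le> 3"
  proof -
    let ?v = "rho + axis p0 1 - axis p5 1 - axis p6 1 - axis p7 1 :: real^8"
    have "\<forall>k. ?v$k - 1/2 \<in> \<int>"
    proof
      fix k
      have "?v$k - 1/2 = axis p0 1 $ k - axis p5 1 $ k - axis p6 1 $ k - axis p7 1 $ k" by simp
      also have "\<dots> \<in> \<int>" by (intro Ints_add Ints_diff ax_Int)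
      finally show "?v$k - 1/2 \<in> \<int>" .
    qed
    then have "?v \<in> Lambda_E8 \<and> ?v \<bullet> rho = 1 \<and> ?v \<bullet> ?v = 4" by (intro M_I) (simp_all add: ips)
    from QM[OF this] have "1 + \<alpha>$p0 - \<alpha>$p5 - \<alpha>$p6 - \<alpha>$p7 \<le> 2" using ar by (simp add: ips)
    then show ?thesis using sum by linarith
  qed
  obtain t where t: "0 \<le> t" "t \<le> 1" "-t/2 \<le> \<alpha>$p7" "\<alpha>$p0 \<le> 1 - t/2"
   and tl: "max 0 (\<alpha>$p0 - t/2) + max 0 (\<alpha>$p1 - t/2) + max 0 (\<alpha>$p2 - t/2) + max 0 (\<alpha>$p3 - t/2) +
   max 0 (\<alpha>$p4 - t/2) + max 0 (\<alpha>$p5 - t/2) + max 0 (\<alpha>$p6 - t/2) + max 0 (\<alpha>$p7 - t/2) \<le> 2 - 2*t"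
   and tu: "2 - 2*t \<le> min (1-t) (\<alpha>$p0 + t/2) + min (1-t) (\<alpha>$p1 + t/2) + min (1-t) (\<alpha>$p2 + t/2) + min (1-t) (\<alpha>$p3 + t/2) +
     min (1-t) (\<alpha>$p4 + t/2) + min (1-t) (\<alpha>$p5 + t/2) + min (1-t) (\<alpha>$p6 + t/2) + min (1-t) (\<alpha>$p7 + t/2)"
    using sorted_core[OF S sum H1 H2 H3 H4 H5 H6] by blast
  show "\<alpha> \<in> P1"
  proof (rule construct[OF ar t(1) t(2)])
    fix i
    have "\<alpha>$p7 \<le> \<alpha>$i \<and> \<alpha>$i \<le> \<alpha>$p0" using allp[of i] S by auto
    then show "-t/2 \<le> \<alpha>$i \<and> \<alpha>$i \<le> 1 - t/2" using t by linarith
  next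
    show "(\<Sum>i\<in>UNIV. max 0 (\<alpha>$i - t/2)) \<le> 2 - 2*t" using tl by (simp only: sumL)
  next
    show "2 - 2*t \<le> (\<Sum>i\<in>UNIV. min (1-t) (\<alpha>$i + t/2))" using tu by (simp only: sumL)
  qed
qed



definition pv :: "(8 \<Rightarrow> 8) \<Rightarrow> real^8 \<Rightarrow> real^8" where
  "pv \<sigma> x = (\<chi> i. x $ \<sigma> i)"

lemma pv_nth[simp]: "pv \<sigma> x $ i = x $ \<sigma> i" by (simp add: pv_def)

lemma linear_pv: "linear (pv \<sigma>)"
  by (rule linearI) (simp_all add: vec_eq_iff)

lemma inj_pv: "bij \<sigma> \<Longrightarrow> inj (pv \<sigma>)"
proof (rule injI)
  fix x y assume b: "bij \<sigma>" and e: "pv \<sigma> x = pv \<sigma> y"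
  show "x = y"
  proof (subst vec_eq_iff, intro allI)
    fix i
    obtain k where "i = \<sigma> k" using b by (metis bij_pointE)
    then show "x$i = y$i" using e by (metis pv_nth)
  qed
qed

lemma pv_inner: "bij \<sigma> \<Longrightarrow> pv \<sigma> x \<bullet> pv \<sigma> y = x \<bullet> y"
proof -
  assume b: "bij \<sigma>"
  have "pv \<sigma> x \<bullet> pv \<sigma> y = (\<Sum>i\<in>UNIV. x $ \<sigma> i * y $ \<sigma> i)" by (simp add: inner_vec_def)
  also have "\<dots> = (\<Sum>i\<in>UNIV. x $ i * y $ i)"
    using sum.reindex_bij_betw[of \<sigma> UNIV UNIV "\<lambda>i. x $ i * y $ i"] b by (simp add: bij_betw_def bij_def)
  finally show ?thesis by (simp add: inner_vec_def)
qed

lemma pv_rho[simp]: "pv \<sigma> rho = rho" by (simp add: vec_eq_iff)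

lemma pv_axis: "bij \<sigma> \<Longrightarrow> pv \<sigma> (axis i 1) = axis (inv \<sigma> i) (1::real)"
  by (auto simp: vec_eq_iff axis_def bij_inv_eq_iff)

lemma pv_inv: "bij \<sigma> \<Longrightarrow> pv \<sigma> (pv (inv \<sigma>) x) = x"
  by (drule bij_is_inj) (simp add: vec_eq_iff)

lemma pv_add: "pv \<sigma> (x + y) = pv \<sigma> x + pv \<sigma> y" by (simp add: vec_eq_iff)
lemma pv_diff: "pv \<sigma> (x - y) = pv \<sigma> x - pv \<sigma> y" by (simp add: vec_eq_iff)

lemma pv_V: assumes b: "bij \<sigma>" shows "pv \<sigma> ` Vset \<subseteq> Vset"
proof
  fix w assume "w \<in> pv \<sigma> ` Vset"
  then obtain v where v: "v \<in> Vset" "w = pv \<sigma> v" by blast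
  then obtain i j where ij: "i < j" and vv: "v = axis i 1 + axis j 1 \<or> v = rho - axis i 1 - axis j 1"
    unfolding Vset_def by blast
  define i' where "i' = inv \<sigma> i"
  define j' where "j' = inv \<sigma> j"
  have ne: "i' \<noteq> j'" using ij b unfolding i'_def j'_def by (metis bij_inv_eq_iff less_irrefl)
  have w: "w = axis i' 1 + axis j' 1 \<or> w = rho - axis i' 1 - axis j' 1"
    using vv v(2) b by (auto simp: pv_add pv_diff pv_axis i'_def j'_def)
  show "w \<in> Vset"
  proof (cases "i' < j'")
    case True then show ?thesis using w unfolding Vset_def by blast
  next
    case False
    then have "j' < i'" using ne by (simp add: neq_iff)
    moreover have "w = axis j' 1 + axis i' 1 \<or> w = rho - axis j' 1 - axis i' 1"
      using w by (auto simp: algebra_simps)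
    ultimately show ?thesis unfolding Vset_def by blast
  qed
qed

lemma pv_P1: assumes b: "bij \<sigma>" shows "pv \<sigma> ` P1 = P1"
proof
  show "pv \<sigma> ` P1 \<subseteq> P1"
    unfolding P1_Vset convex_hull_linear_image[OF linear_pv] by (rule hull_mono[OF pv_V[OF b]])
next
  have bi: "bij (inv \<sigma>)" using b by (simp add: bij_imp_bij_inv)
  show "P1 \<subseteq> pv \<sigma> ` P1"
  proof
    fix x assume "x \<in> P1"
    then have "pv (inv \<sigma>) x \<in> pv (inv \<sigma>) ` P1" by blast
    also have "\<dots> \<subseteq> P1"
      unfolding P1_Vset convex_hull_linear_image[OF linear_pv] by (rule hull_mono[OF pv_V[OF bi]])
    finally have "pv \<sigma> (pv (inv \<sigma>) x) \<in> pv \<sigma> ` P1" by blast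
    then show "x \<in> pv \<sigma> ` P1" using pv_inv[OF b] by simp
  qed
qed

lemma face_transfer: assumes b: "bij \<sigma>"
  shows "{\<alpha> \<in> P1. \<alpha> \<bullet> pv \<sigma> c = r} = pv \<sigma> ` {\<alpha> \<in> P1. \<alpha> \<bullet> c = r}"
proof
  show "pv \<sigma> ` {\<alpha> \<in> P1. \<alpha> \<bullet> c = r} \<subseteq> {\<alpha> \<in> P1. \<alpha> \<bullet> pv \<sigma> c = r}"
    using pv_P1[OF b] pv_inner[OF b] by auto
next
  show "{\<alpha> \<in> P1. \<alpha> \<bullet> pv \<sigma> c = r} \<subseteq> pv \<sigma> ` {\<alpha> \<in> P1. \<alpha> \<bullet> c = r}"
  proof
    fix \<alpha> assume a: "\<alpha> \<in> {\<alpha> \<in> P1. \<alpha> \<bullet> pv \<sigma> c = r}"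
    then obtain \<beta> where be: "\<beta> \<in> P1" "\<alpha> = pv \<sigma> \<beta>" using pv_P1[OF b] by blast
    then have "\<beta> \<bullet> c = r" using a pv_inner[OF b] by simp
    then show "\<alpha> \<in> pv \<sigma> ` {\<alpha> \<in> P1. \<alpha> \<bullet> c = r}" using be by blast
  qed
qed

lemma facet_transfer: assumes b: "bij \<sigma>" and F: "{\<alpha> \<in> P1. \<alpha> \<bullet> c = r} facet_of P1"
  shows "{\<alpha> \<in> P1. \<alpha> \<bullet> pv \<sigma> c = r} facet_of P1"
proof -
  let ?F = "{\<alpha> \<in> P1. \<alpha> \<bullet> c = r}"
  have l: "linear (pv \<sigma>)" and i: "inj (pv \<sigma>)" using linear_pv inj_pv[OF b] by auto
  have "pv \<sigma> ` ?F facet_of pv \<sigma> ` P1"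
    using F unfolding facet_of_def
    by (simp add: face_of_linear_image[OF l i] aff_dim_injective_linear_image[OF l i])
  then show ?thesis using face_transfer[OF b] pv_P1[OF b] by simp
qed

lemma match:
  fixes f g :: "8 \<Rightarrow> real"
  assumes W: "finite W" "\<And>i. f i \<in> W" "\<And>i. g i \<in> W"
    and C: "\<And>w. w \<in> W \<Longrightarrow> card {i. f i = w} = card {i. g i = w}"
  shows "\<exists>\<sigma>. bij \<sigma> \<and> (\<forall>i. f i = g (\<sigma> i))"
proof -
  have "\<forall>w\<in>W. \<exists>h. bij_betw h {i. f i = w} {i. g i = w}"
    using C by (auto intro: finite_same_card_bij)
  then obtain H where H: "\<And>w. w \<in> W \<Longrightarrow> bij_betw (H w) {i. f i = w} {i. g i = w}" by metis
  define \<sigma> where "\<sigma> i = H (f i) i" for i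
  have fg: "g (\<sigma> i) = f i" for i
    using bij_betwE[OF H[OF W(2)[of i]]] unfolding \<sigma>_def by auto
  have "inj \<sigma>"
  proof (rule injI)
    fix i j assume e: "\<sigma> i = \<sigma> j"
    then have "f i = f j" using fg by metis
    then show "i = j" using e H[OF W(2)[of i]] unfolding \<sigma>_def bij_betw_def inj_on_def by auto
  qed
  then have "bij \<sigma>" by (simp add: bij_def finite_UNIV_inj_surj)
  then show ?thesis using fg by auto
qed

lemma sum_level:
  fixes f :: "8 \<Rightarrow> real"
  assumes "finite W" "\<And>i. f i \<in> W"
  shows "(\<Sum>i\<in>UNIV. h (f i)) = (\<Sum>w\<in>W. real (card {i. f i = w}) * h w)"
proof -
  have "(\<Sum>i\<in>UNIV. h (f i)) = (\<Sum>w\<in>W. \<Sum>i\<in>{i\<in>UNIV. f i = w}. h (f i))"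
    by (rule sum.group[symmetric]) (use assms in auto)
  also have "\<dots> = (\<Sum>w\<in>W. real (card {i. f i = w}) * h w)"
    by (intro sum.cong refl) simp
  finally show ?thesis .
qed

lemma card8: "card {i::8. P i} = (if P 0 then 1 else 0) + (if P 1 then 1 else 0) + (if P 2 then 1 else 0) +
  (if P 3 then 1 else 0) + (if P 4 then 1 else 0) + (if P 5 then 1 else 0) + (if P 6 then 1 else 0) + (if P 7 then 1 else 0)"
proof -
  have "card {i::8. P i} = (\<Sum>i\<in>UNIV. if P i then 1 else 0)"
    by (simp add: sum.If_cases)
  then show ?thesis by (simp only: sum8)
qed


lemma aff_indep7:
  fixes v1 v2 v3 v4 v5 v6 v7 :: "real^8"
  assumes d: "distinct [v1,v2,v3,v4,v5,v6,v7]"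
  and L: "\<And>u1 u2 u3 u4 u5 u6 u7. u1+u2+u3+u4+u5+u6+u7 = 0 \<Longrightarrow>
     u1 *\<^sub>R v1 + u2 *\<^sub>R v2 + u3 *\<^sub>R v3 + u4 *\<^sub>R v4 + u5 *\<^sub>R v5 + u6 *\<^sub>R v6 + u7 *\<^sub>R v7 = 0 \<Longrightarrow>
     u1 = 0 \<and> u2 = 0 \<and> u3 = 0 \<and> u4 = 0 \<and> u5 = 0 \<and> u6 = 0 \<and> u7 = 0"
  shows "\<not> affine_dependent {v1,v2,v3,v4,v5,v6,v7} \<and> card {v1,v2,v3,v4,v5,v6,v7} = 7"
proof
  show "card {v1,v2,v3,v4,v5,v6,v7} = 7" using distinct_card[OF d] by simp
  show "\<not> affine_dependent {v1,v2,v3,v4,v5,v6,v7}"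
  proof
    assume "affine_dependent {v1,v2,v3,v4,v5,v6,v7}"
    then obtain U where U: "sum U {v1,v2,v3,v4,v5,v6,v7} = 0" "\<exists>v\<in>{v1,v2,v3,v4,v5,v6,v7}. U v \<noteq> 0"
      "(\<Sum>v\<in>{v1,v2,v3,v4,v5,v6,v7}. U v *\<^sub>R v) = 0"
      by (auto simp: affine_dependent_explicit_finite)
    have "U v1 + U v2 + U v3 + U v4 + U v5 + U v6 + U v7 = 0" using U(1) d by (simp add: add.assoc)
    moreover have "U v1 *\<^sub>R v1 + U v2 *\<^sub>R v2 + U v3 *\<^sub>R v3 + U v4 *\<^sub>R v4 + U v5 *\<^sub>R v5 + U v6 *\<^sub>R v6 + U v7 *\<^sub>R v7 = 0"
      using U(3) d by (simp add: add.assoc)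
    ultimately have "U v1 = 0 \<and> U v2 = 0 \<and> U v3 = 0 \<and> U v4 = 0 \<and> U v5 = 0 \<and> U v6 = 0 \<and> U v7 = 0" by (rule L)
    then show False using U(2) by auto
  qed
qed

lemma rho_ne0: "rho \<noteq> 0"
proof
  assume "rho = 0" then have "rho $ 0 = (0::real^8) $ 0" by simp
  then show False by simp
qed

lemma affdim_P1_le: "aff_dim P1 \<le> 7"
proof -
  have "P1 \<subseteq> {x. rho \<bullet> x = 1}" using P1_sub_Q by (auto simp: Qset_def inner_commute)
  then have "aff_dim P1 \<le> aff_dim {x. rho \<bullet> x = 1}" by (rule aff_dim_subset)
  also have "\<dots> = 7" using aff_dim_hyperplane[OF rho_ne0, of 1] by simp
  finally show ?thesis .
qed

lemma facet_from:
  assumes valid: "\<And>x. x \<in> P1 \<Longrightarrow> x \<bullet> c \<le> r"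
    and Ssub: "S \<subseteq> {\<alpha>\<in>P1. \<alpha> \<bullet> c = r}" and ind: "\<not> affine_dependent S \<and> card S = 7"
    and v: "v \<in> P1" "v \<bullet> c < r"
  shows "{\<alpha>\<in>P1. \<alpha> \<bullet> c = r} facet_of P1"
proof -
  let ?F = "{\<alpha>\<in>P1. \<alpha> \<bullet> c = r}"
  have Feq: "?F = P1 \<inter> {x. c \<bullet> x = r}" by (auto simp: inner_commute)
  have face: "?F face_of P1" unfolding Feq
    by (rule face_of_Int_supporting_hyperplane_le[OF convex_P1]) (use valid in \<open>auto simp: inner_commute\<close>)
  have "aff_dim S = 6" using aff_dim_affine_independent[of S] ind by simp
  then have F6: "aff_dim ?F \<ge> 6" using aff_dim_subset[OF Ssub] by simp
  have "S \<noteq> {}" using ind by auto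
  then have ne: "?F \<noteq> {}" using Ssub by blast
  have "?F \<noteq> P1" using v by auto
  then have "aff_dim ?F < aff_dim P1" by (rule face_of_aff_dim_lt[OF convex_P1 face])
  then show ?thesis using F6 affdim_P1_le face ne unfolding facet_of_def by simp
qed

lemmas lt8 = less_bit0_def bit0.Rep_numeral bit0.Rep_0 bit0.Rep_1

lemma inP1: "v \<in> Vset \<Longrightarrow> v \<in> P1" by (simp add: P1_Vset hull_inc)
lemma inE: "i < j \<Longrightarrow> axis i 1 + axis j 1 \<in> P1" by (rule inP1) (auto simp: Vset_def)
lemma inF: "i < j \<Longrightarrow> rho - axis i 1 - axis j 1 \<in> P1" by (rule inP1) (auto simp: Vset_def)

lemma facet_m1: "{\<alpha>\<in>P1. \<alpha> \<bullet> (2 *\<^sub>R axis 0 1) = 2} facet_of P1"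
proof (rule facet_from)
  let ?c = "2 *\<^sub>R axis 0 1 :: real^8"
  have cm: "?c \<in> Lambda_E8 \<and> ?c \<bullet> rho = 1 \<and> ?c \<bullet> ?c = 4"
    by (simp add: Lambda_E8_def inner_scaleR_left inner_scaleR_right)
  show "x \<bullet> ?c \<le> 2" if "x \<in> P1" for x
  proof -
    have "x \<in> Qset" using P1_sub_Q that by blast
    then show ?thesis using cm unfolding Qset_def by blast
  qed
  let ?S = "{axis 0 1 + axis 1 1, axis 0 1 + axis 2 1, axis 0 1 + axis 3 1, axis 0 1 + axis 4 1,
     axis 0 1 + axis 5 1, axis 0 1 + axis 6 1, axis 0 1 + axis 7 1} :: (real^8) set"
  show "?S \<subseteq> {\<alpha>\<in>P1. \<alpha> \<bullet> ?c = 2}"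
    by (auto intro!: inE simp: inner_add_left inner_scaleR_right lt8)
  show "\<not> affine_dependent ?S \<and> card ?S = 7"
    by (rule aff_indep7) (auto simp: vec_eq_iff ex8 all8)
  show "axis 1 1 + axis 2 1 \<in> P1" by (rule inE) (simp add: lt8)
  show "(axis 1 1 + axis 2 1) \<bullet> ?c < 2" by (simp add: inner_add_left inner_scaleR_right)
qed


lemma facet_d0: "{\<alpha>\<in>P1. \<alpha> \<bullet> (axis 0 1 - axis 1 1) = 1} facet_of P1"
proof (rule facet_from)
  let ?c = "axis 0 1 - axis 1 1 :: real^8"
  have cm: "?c \<in> R_E7"
    by (simp add: R_E7_def R_E8_def Lambda_E8_def all8 inner_add_left inner_add_right inner_diff_left inner_diff_right inner_scaleR_left inner_scaleR_right rho_rho)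
  show "x \<bullet> ?c \<le> 1" if "x \<in> P1" for x
  proof -
    have "x \<in> Qset" using P1_sub_Q that by blast
    then show ?thesis using cm unfolding Qset_def by blast
  qed
  let ?S = "{axis 0 1 + axis 2 1, axis 0 1 + axis 3 1, axis 0 1 + axis 4 1, axis 0 1 + axis 5 1, axis 0 1 + axis 6 1, axis 0 1 + axis 7 1, rho - axis 1 1 - axis 2 1} :: (real^8) set"
  show "?S \<subseteq> {\<alpha>\<in>P1. \<alpha> \<bullet> ?c = 1}"
    by (auto intro!: inE inF simp: inner_add_left inner_add_right inner_diff_left inner_diff_right inner_scaleR_left inner_scaleR_right rho_rho lt8)
  show "\<not> affine_dependent ?S \<and> card ?S = 7"
    by (rule aff_indep7) (auto simp: vec_eq_iff ex8 all8)
  show "axis 1 1 + axis 2 1 \<in> P1" by (intro inE inF) (simp add: lt8)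
  show "(axis 1 1 + axis 2 1) \<bullet> ?c < 1" by (simp add: inner_add_left inner_add_right inner_diff_left inner_diff_right inner_scaleR_left inner_scaleR_right rho_rho)
qed

lemma facet_d1: "{\<alpha>\<in>P1. \<alpha> \<bullet> (rho - axis 0 1 - axis 1 1 - axis 2 1 - axis 3 1) = 1} facet_of P1"
proof (rule facet_from)
  let ?c = "rho - axis 0 1 - axis 1 1 - axis 2 1 - axis 3 1 :: real^8"
  have cm: "?c \<in> R_E7"
    by (simp add: R_E7_def R_E8_def Lambda_E8_def all8 inner_add_left inner_add_right inner_diff_left inner_diff_right inner_scaleR_left inner_scaleR_right rho_rho)
  show "x \<bullet> ?c \<le> 1" if "x \<in> P1" for x
  proof -
    have "x \<in> Qset" using P1_sub_Q that by blast
    then show ?thesis using cm unfolding Qset_def by blast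
  qed
  let ?S = "{axis 4 1 + axis 5 1, axis 4 1 + axis 6 1, axis 4 1 + axis 7 1, axis 5 1 + axis 6 1, rho - axis 0 1 - axis 1 1, rho - axis 0 1 - axis 2 1, rho - axis 1 1 - axis 2 1} :: (real^8) set"
  show "?S \<subseteq> {\<alpha>\<in>P1. \<alpha> \<bullet> ?c = 1}"
    by (auto intro!: inE inF simp: inner_add_left inner_add_right inner_diff_left inner_diff_right inner_scaleR_left inner_scaleR_right rho_rho lt8)
  show "\<not> affine_dependent ?S \<and> card ?S = 7"
    by (rule aff_indep7) (auto simp: vec_eq_iff ex8 all8)
  show "axis 0 1 + axis 1 1 \<in> P1" by (intro inE inF) (simp add: lt8)
  show "(axis 0 1 + axis 1 1) \<bullet> ?c < 1" by (simp add: inner_add_left inner_add_right inner_diff_left inner_diff_right inner_scaleR_left inner_scaleR_right rho_rho)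
qed

lemma facet_m2: "{\<alpha>\<in>P1. \<alpha> \<bullet> (axis 0 1 + axis 1 1 + axis 2 1 - axis 3 1) = 2} facet_of P1"
proof (rule facet_from)
  let ?c = "axis 0 1 + axis 1 1 + axis 2 1 - axis 3 1 :: real^8"
  have cm: "?c \<in> Lambda_E8 \<and> ?c \<bullet> rho = 1 \<and> ?c \<bullet> ?c = 4"
    by (simp add: Lambda_E8_def all8 inner_add_left inner_add_right inner_diff_left inner_diff_right inner_scaleR_left inner_scaleR_right rho_rho)
  show "x \<bullet> ?c \<le> 2" if "x \<in> P1" for x
  proof -
    have "x \<in> Qset" using P1_sub_Q that by blast
    then show ?thesis using cm unfolding Qset_def by blast
  qed
  let ?S = "{axis 0 1 + axis 1 1, axis 0 1 + axis 2 1, axis 1 1 + axis 2 1, rho - axis 3 1 - axis 4 1, rho - axis 3 1 - axis 5 1, rho - axis 3 1 - axis 6 1, rho - axis 3 1 - axis 7 1} :: (real^8) set"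
  show "?S \<subseteq> {\<alpha>\<in>P1. \<alpha> \<bullet> ?c = 2}"
    by (auto intro!: inE inF simp: inner_add_left inner_add_right inner_diff_left inner_diff_right inner_scaleR_left inner_scaleR_right rho_rho lt8)
  show "\<not> affine_dependent ?S \<and> card ?S = 7"
    by (rule aff_indep7) (auto simp: vec_eq_iff ex8 all8)
  show "axis 4 1 + axis 5 1 \<in> P1" by (intro inE inF) (simp add: lt8)
  show "(axis 4 1 + axis 5 1) \<bullet> ?c < 2" by (simp add: inner_add_left inner_add_right inner_diff_left inner_diff_right inner_scaleR_left inner_scaleR_right rho_rho)
qed

lemma facet_m3: "{\<alpha>\<in>P1. \<alpha> \<bullet> (rho + axis 0 1 - axis 5 1 - axis 6 1 - axis 7 1) = 2} facet_of P1"
proof (rule facet_from)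
  let ?c = "rho + axis 0 1 - axis 5 1 - axis 6 1 - axis 7 1 :: real^8"
  have cm: "?c \<in> Lambda_E8 \<and> ?c \<bullet> rho = 1 \<and> ?c \<bullet> ?c = 4"
    by (simp add: Lambda_E8_def all8 inner_add_left inner_add_right inner_diff_left inner_diff_right inner_scaleR_left inner_scaleR_right rho_rho)
  show "x \<bullet> ?c \<le> 2" if "x \<in> P1" for x
  proof -
    have "x \<in> Qset" using P1_sub_Q that by blast
    then show ?thesis using cm unfolding Qset_def by blast
  qed
  let ?S = "{axis 0 1 + axis 1 1, axis 0 1 + axis 2 1, axis 0 1 + axis 3 1, axis 0 1 + axis 4 1, rho - axis 5 1 - axis 6 1, rho - axis 5 1 - axis 7 1, rho - axis 6 1 - axis 7 1} :: (real^8) set"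
  show "?S \<subseteq> {\<alpha>\<in>P1. \<alpha> \<bullet> ?c = 2}"
    by (auto intro!: inE inF simp: inner_add_left inner_add_right inner_diff_left inner_diff_right inner_scaleR_left inner_scaleR_right rho_rho lt8)
  show "\<not> affine_dependent ?S \<and> card ?S = 7"
    by (rule aff_indep7) (auto simp: vec_eq_iff ex8 all8)
  show "axis 5 1 + axis 6 1 \<in> P1" by (intro inE inF) (simp add: lt8)
  show "(axis 5 1 + axis 6 1) \<bullet> ?c < 2" by (simp add: inner_add_left inner_add_right inner_diff_left inner_diff_right inner_scaleR_left inner_scaleR_right rho_rho)
qed

lemma facet_m4: "{\<alpha>\<in>P1. \<alpha> \<bullet> (rho - 2 *\<^sub>R axis 0 1) = 2} facet_of P1"
proof (rule facet_from)
  let ?c = "rho - 2 *\<^sub>R axis 0 1 :: real^8"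
  have cm: "?c \<in> Lambda_E8 \<and> ?c \<bullet> rho = 1 \<and> ?c \<bullet> ?c = 4"
    by (simp add: Lambda_E8_def all8 inner_add_left inner_add_right inner_diff_left inner_diff_right inner_scaleR_left inner_scaleR_right rho_rho)
  show "x \<bullet> ?c \<le> 2" if "x \<in> P1" for x
  proof -
    have "x \<in> Qset" using P1_sub_Q that by blast
    then show ?thesis using cm unfolding Qset_def by blast
  qed
  let ?S = "{rho - axis 0 1 - axis 1 1, rho - axis 0 1 - axis 2 1, rho - axis 0 1 - axis 3 1, rho - axis 0 1 - axis 4 1, rho - axis 0 1 - axis 5 1, rho - axis 0 1 - axis 6 1, rho - axis 0 1 - axis 7 1} :: (real^8) set"
  show "?S \<subseteq> {\<alpha>\<in>P1. \<alpha> \<bullet> ?c = 2}"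
    by (auto intro!: inE inF simp: inner_add_left inner_add_right inner_diff_left inner_diff_right inner_scaleR_left inner_scaleR_right rho_rho lt8)
  show "\<not> affine_dependent ?S \<and> card ?S = 7"
    by (rule aff_indep7) (auto simp: vec_eq_iff ex8 all8)
  show "axis 1 1 + axis 2 1 \<in> P1" by (intro inE inF) (simp add: lt8)
  show "(axis 1 1 + axis 2 1) \<bullet> ?c < 2" by (simp add: inner_add_left inner_add_right inner_diff_left inner_diff_right inner_scaleR_left inner_scaleR_right rho_rho)
qed



lemma sq_big: "(k::real) \<ge> 0 \<Longrightarrow> k \<le> t \<or> t \<le> -k \<Longrightarrow> k*k \<le> t*t"
proof -
  assume k: "k \<ge> 0" "k \<le> t \<or> t \<le> -k"
  then have "k \<le> \<bar>t\<bar>" by auto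
  then have "k*k \<le> \<bar>t\<bar>*\<bar>t\<bar>" using k(1) by (intro mult_mono) auto
  then show ?thesis by simp
qed

lemma ints_vals5: "(t::real) \<in> \<int> \<Longrightarrow> t*t \<le> 4 \<Longrightarrow> t = -2 \<or> t = -1 \<or> t = 0 \<or> t = 1 \<or> t = 2"
proof -
  assume t: "t \<in> \<int>" "t*t \<le> 4"
  then obtain m where m: "t = of_int m" by (auto elim: Ints_cases)
  have "\<not> (3 \<le> t \<or> t \<le> -3)" using sq_big[of 3 t] t(2) by auto
  then have "-3 < m" "m < 3" using m by auto
  then have "m = -2 \<or> m = -1 \<or> m = 0 \<or> m = 1 \<or> m = 2" by presburger
  then show ?thesis using m by auto
qed

lemma ints_vals3: "(t::real) \<in> \<int> \<Longrightarrow> t*t \<le> 2 \<Longrightarrow> t = -1 \<or> t = 0 \<or> t = 1"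
proof -
  assume t: "t \<in> \<int>" "t*t \<le> 2"
  then obtain m where m: "t = of_int m" by (auto elim: Ints_cases)
  have "\<not> (2 \<le> t \<or> t \<le> -2)" using sq_big[of 2 t] t(2) by auto
  then have "-2 < m" "m < 2" using m by auto
  then have "m = -1 \<or> m = 0 \<or> m = 1" by presburger
  then show ?thesis using m by auto
qed

lemma half_vals4: "(t::real) - 1/2 \<in> \<int> \<Longrightarrow> t*t \<le> 9/4 \<Longrightarrow> t = -3/2 \<or> t = -1/2 \<or> t = 1/2 \<or> t = 3/2"
proof -
  assume t: "t - 1/2 \<in> \<int>" "t*t \<le> 9/4"
  then obtain m where m: "t - 1/2 = of_int m" by (auto elim: Ints_cases)
  have "\<not> (5/2 \<le> t \<or> t \<le> -5/2)" using sq_big[of "5/2" t] t(2) by auto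
  then have "-3 < m" "m < 2" using m by auto
  then have "m = -2 \<or> m = -1 \<or> m = 0 \<or> m = 1" by presburger
  then show ?thesis using m by (auto simp: algebra_simps)
qed

lemma half_vals2: "(t::real) - 1/2 \<in> \<int> \<Longrightarrow> t*t \<le> 1/4 \<Longrightarrow> t = -1/2 \<or> t = 1/2"
proof -
  assume t: "t - 1/2 \<in> \<int>" "t*t \<le> 1/4"
  then obtain m where m: "t - 1/2 = of_int m" by (auto elim: Ints_cases)
  have "\<not> (3/2 \<le> t \<or> t \<le> -3/2)" using sq_big[of "3/2" t] t(2) by auto
  then have "-2 < m" "m < 1" using m by auto
  then have "m = -1 \<or> m = 0" by presburger
  then show ?thesis using m by (auto simp: algebra_simps)
qed

lemma vec_of_match: "(\<forall>i. f $ i = g $ \<sigma> i) \<Longrightarrow> f = pv \<sigma> g" by (simp add: vec_eq_iff)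


lemma RE7_class:
  assumes d: "\<delta> \<in> R_E7"
  shows "\<exists>\<sigma>. bij \<sigma> \<and> (\<delta> = pv \<sigma> (axis 0 1 - axis 1 1) \<or> \<delta> = pv \<sigma> (rho - axis 0 1 - axis 1 1 - axis 2 1 - axis 3 1))"
proof -
  have L: "\<delta> \<in> Lambda_E8" and n: "(\<Sum>k\<in>UNIV. \<delta>$k * \<delta>$k) = 2" and s: "(\<Sum>k\<in>UNIV. \<delta>$k) = 0"
    using d by (auto simp: R_E7_def R_E8_def sumsq inner_rho)
  define c where "c w = card {i. \<delta>$i = w}" for w
  from Lambda_cases[OF L] show ?thesis
  proof
    assume I: "\<forall>k. \<delta>$k \<in> \<int>"
    have sq: "\<delta>$k * \<delta>$k \<le> 2" for k using one_le_sum[of "\<lambda>k. \<delta>$k * \<delta>$k" k] n by simp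
    let ?W = "{-1, 0, 1} :: real set"
    have vals: "\<delta>$i \<in> ?W" for i using ints_vals3[OF _ sq[of i]] I by auto
    have e1: "(\<Sum>i\<in>UNIV. (\<lambda>_. 1::real) (\<delta>$i)) = (\<Sum>w\<in>?W. real (c w) * 1)"
      unfolding c_def by (rule sum_level, simp, rule vals)
    have e2: "(\<Sum>i\<in>UNIV. (\<lambda>x. x) (\<delta>$i)) = (\<Sum>w\<in>?W. real (c w) * w)"
      unfolding c_def by (rule sum_level, simp, rule vals)
    have e3: "(\<Sum>i\<in>UNIV. (\<lambda>x. x*x) (\<delta>$i)) = (\<Sum>w\<in>?W. real (c w) * (w*w))"
      unfolding c_def by (rule sum_level, simp, rule vals)
    have "real (c (-1)) + real (c 0) + real (c 1) = 8" "- real (c (-1)) + real (c 1) = 0"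
      "real (c (-1)) + real (c 1) = 2" using e1 e2 e3 s n by simp_all
    then have "real (c (-1)) = 1" "real (c 0) = 6" "real (c 1) = 1" by linarith+
    then have C: "c (-1) = 1" "c 0 = 6" "c 1 = 1" by simp_all
    let ?g = "axis 0 1 - axis 1 1 :: real^8"
    have "\<exists>\<sigma>. bij \<sigma> \<and> (\<forall>i. \<delta>$i = ?g $ \<sigma> i)"
    proof (rule match[of ?W])
      show "?g $ i \<in> ?W" for i by simp
      show "card {i. \<delta>$i = w} = card {i. ?g$i = w}" if "w \<in> ?W" for w
      proof -
        have "card {i. \<delta>$i = w} = c w" by (simp add: c_def)
        moreover from that have "card {i. ?g$i = w} = c w" using C unfolding card8 by (elim insertE) auto
        ultimately show ?thesis by simp
      qed
      show "finite ?W" by simp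
      show "\<delta>$i \<in> ?W" for i by (rule vals)
    qed
    then show ?thesis using vec_of_match by blast
  next
    assume H: "\<forall>k. \<delta>$k - 1/2 \<in> \<int>"
    have h: "(\<Sum>k\<in>UNIV. \<delta>$k*\<delta>$k - 1/4) = 0" using n by (simp add: sum_subtractf)
    have sq: "\<delta>$k*\<delta>$k \<le> 1/4" for k
      using one_le_sum[of "\<lambda>k. \<delta>$k*\<delta>$k - 1/4" k] h H half_sq by auto
    let ?W = "{-1/2, 1/2} :: real set"
    have vals: "\<delta>$i \<in> ?W" for i using half_vals2[OF _ sq[of i]] H by auto
    have e1: "(\<Sum>i\<in>UNIV. (\<lambda>_. 1::real) (\<delta>$i)) = (\<Sum>w\<in>?W. real (c w) * 1)"
      unfolding c_def by (rule sum_level, simp, rule vals)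
    have e2: "(\<Sum>i\<in>UNIV. (\<lambda>x. x) (\<delta>$i)) = (\<Sum>w\<in>?W. real (c w) * w)"
      unfolding c_def by (rule sum_level, simp, rule vals)
    have "real (c (-1/2)) + real (c (1/2)) = 8" "- real (c (-1/2))/2 + real (c (1/2))/2 = 0"
      using e1 e2 s by simp_all
    then have "real (c (-1/2)) = 4" "real (c (1/2)) = 4" by linarith+
    then have C: "c (-1/2) = 4" "c (1/2) = 4" by simp_all
    let ?g = "rho - axis 0 1 - axis 1 1 - axis 2 1 - axis 3 1 :: real^8"
    have "\<exists>\<sigma>. bij \<sigma> \<and> (\<forall>i. \<delta>$i = ?g $ \<sigma> i)"
    proof (rule match[of ?W])
      show "?g $ i \<in> ?W" for i
        by (cases "i = 0"; cases "i = 1"; cases "i = 2"; cases "i = 3") simp_all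
      show "card {i. \<delta>$i = w} = card {i. ?g$i = w}" if "w \<in> ?W" for w
      proof -
        have "card {i. \<delta>$i = w} = c w" by (simp add: c_def)
        moreover have "card {i. ?g$i = w} = c w"
        proof -
          have "w = -1/2 \<or> w = 1/2" using that by simp
          then show ?thesis
          proof
            assume w: "w = -1/2" show ?thesis using C(1) unfolding w card8 by simp
          next
            assume w: "w = 1/2" show ?thesis using C(2) unfolding w card8 by simp
          qed
        qed
        ultimately show ?thesis by simp
      qed
      show "finite ?W" by simp
      show "\<delta>$i \<in> ?W" for i by (rule vals)
    qed
    then show ?thesis using vec_of_match by blast
  qed
qed
lemma M_class:
  assumes L: "\<mu> \<in> Lambda_E8" and r: "\<mu> \<bullet> rho = 1" and mm: "\<mu> \<bullet> \<mu> = 4"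
  shows "\<exists>\<sigma>. bij \<sigma> \<and> (\<mu> = pv \<sigma> (2 *\<^sub>R axis 0 1) \<or> \<mu> = pv \<sigma> (axis 0 1 + axis 1 1 + axis 2 1 - axis 3 1)
     \<or> \<mu> = pv \<sigma> (rho + axis 0 1 - axis 5 1 - axis 6 1 - axis 7 1) \<or> \<mu> = pv \<sigma> (rho - 2 *\<^sub>R axis 0 1))"
proof -
  have n: "(\<Sum>k\<in>UNIV. \<mu>$k * \<mu>$k) = 4" and s: "(\<Sum>k\<in>UNIV. \<mu>$k) = 2"
    using r mm by (auto simp: sumsq inner_rho)
  define c where "c w = card {i. \<mu>$i = w}" for w
  from Lambda_cases[OF L] show ?thesis
  proof
    assume I: "\<forall>k. \<mu>$k \<in> \<int>"
    have sq: "\<mu>$k * \<mu>$k \<le> 4" for k using one_le_sum[of "\<lambda>k. \<mu>$k * \<mu>$k" k] n by simp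
    let ?W = "{-2, -1, 0, 1, 2} :: real set"
    have vals: "\<mu>$i \<in> ?W" for i using ints_vals5[OF _ sq[of i]] I by auto
    have e1: "(\<Sum>i\<in>UNIV. (\<lambda>_. 1::real) (\<mu>$i)) = (\<Sum>w\<in>?W. real (c w) * 1)"
      unfolding c_def by (rule sum_level, simp, rule vals)
    have e2: "(\<Sum>i\<in>UNIV. (\<lambda>x. x) (\<mu>$i)) = (\<Sum>w\<in>?W. real (c w) * w)"
      unfolding c_def by (rule sum_level, simp, rule vals)
    have e3: "(\<Sum>i\<in>UNIV. (\<lambda>x. x*x) (\<mu>$i)) = (\<Sum>w\<in>?W. real (c w) * (w*w))"
      unfolding c_def by (rule sum_level, simp, rule vals)
    have r1: "real (c (-2)) + real (c (-1)) + real (c 0) + real (c 1) + real (c 2) = 8"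
      "-2 * real (c (-2)) - real (c (-1)) + real (c 1) + 2 * real (c 2) = 2"
      "4 * real (c (-2)) + real (c (-1)) + real (c 1) + 4 * real (c 2) = 4"
      using e1 e2 e3 s n by simp_all
    have "real (c (-2) + c (-1) + c 0 + c 1 + c 2) = real 8" using r1(1) by simp
    then have n1: "c (-2) + c (-1) + c 0 + c 1 + c 2 = 8" by (simp only: of_nat_eq_iff)
    have "real (c 1 + 2 * c 2) = real (2 + 2 * c (-2) + c (-1))" using r1(2) by simp
    then have n2: "c 1 + 2 * c 2 = 2 + 2 * c (-2) + c (-1)" by (simp only: of_nat_eq_iff)
    have "real (4 * c (-2) + c (-1) + c 1 + 4 * c 2) = real 4" using r1(3) by simp
    then have n3: "4 * c (-2) + c (-1) + c 1 + 4 * c 2 = 4" by (simp only: of_nat_eq_iff)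
    have T: "c 2 \<le> 1" "c (-2) \<le> 1" using n3 by linarith+
    then have T2: "c 2 = 0 \<or> c 2 = 1" "c (-2) = 0 \<or> c (-2) = 1" by auto
    consider (ca) "c 2 = 0" "c (-2) = 0" | (cb) "c 2 = 0" "c (-2) = 1" | (cc) "c 2 = 1" "c (-2) = 0"
      | (cd) "c 2 = 1" "c (-2) = 1" using T2 by (elim disjE) simp_all
    then have "(c 2 = 1 \<and> c (-2) = 0 \<and> c (-1) = 0 \<and> c 1 = 0 \<and> c 0 = 7) \<or>
          (c 2 = 0 \<and> c (-2) = 0 \<and> c (-1) = 1 \<and> c 1 = 3 \<and> c 0 = 4)"
    proof cases
      case ca then have "c (-1) = 1" "c 1 = 3" "c 0 = 4" using n1 n2 n3 by linarith+
      then show ?thesis using ca by simp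
    next
      case cb then have False using n2 n3 by linarith
      then show ?thesis ..
    next
      case cc then have "c (-1) = 0" "c 1 = 0" "c 0 = 7" using n1 n2 n3 by linarith+
      then show ?thesis using cc by simp
    next
      case cd then have False using n3 by linarith
      then show ?thesis ..
    qed
    then show ?thesis
    proof (elim disjE conjE)
      assume C: "c 2 = 1" "c (-2) = 0" "c (-1) = 0" "c 1 = 0" "c 0 = 7"
      let ?g = "2 *\<^sub>R axis 0 1 :: real^8"
      have "\<exists>\<sigma>. bij \<sigma> \<and> (\<forall>i. \<mu>$i = ?g $ \<sigma> i)"
      proof (rule match[of ?W])
        show "?g $ i \<in> ?W" for i
          by (cases "i = 0") simp_all
        show "card {i. \<mu>$i = w} = card {i. ?g$i = w}" if "w \<in> ?W" for w
        proof -
          have "card {i. \<mu>$i = w} = c w" by (simp add: c_def)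
          moreover have "card {i. ?g$i = w} = c w"
          proof -
            have "w = 2 \<or> w = -2 \<or> w = -1 \<or> w = 1 \<or> w = 0" using that by auto
            then show ?thesis
            proof (elim disjE)
            assume w: "w = 2" show ?thesis using C(1) unfolding w card8 by simp
          next
            assume w: "w = -2" show ?thesis using C(2) unfolding w card8 by simp
          next
            assume w: "w = -1" show ?thesis using C(3) unfolding w card8 by simp
          next
            assume w: "w = 1" show ?thesis using C(4) unfolding w card8 by simp
          next
            assume w: "w = 0" show ?thesis using C(5) unfolding w card8 by simp
            qed
          qed
          ultimately show ?thesis by simp
        qed
        show "finite ?W" by simp
        show "\<mu>$i \<in> ?W" for i by (rule vals)
      qed
      then show ?thesis using vec_of_match by blast
    next
      assume C: "c 2 = 0" "c (-2) = 0" "c (-1) = 1" "c 1 = 3" "c 0 = 4"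
      let ?g = "axis 0 1 + axis 1 1 + axis 2 1 - axis 3 1 :: real^8"
      have "\<exists>\<sigma>. bij \<sigma> \<and> (\<forall>i. \<mu>$i = ?g $ \<sigma> i)"
      proof (rule match[of ?W])
        show "?g $ i \<in> ?W" for i
          by (cases "i = 0"; cases "i = 1"; cases "i = 2"; cases "i = 3") simp_all
        show "card {i. \<mu>$i = w} = card {i. ?g$i = w}" if "w \<in> ?W" for w
        proof -
          have "card {i. \<mu>$i = w} = c w" by (simp add: c_def)
          moreover have "card {i. ?g$i = w} = c w"
          proof -
            have "w = 2 \<or> w = -2 \<or> w = -1 \<or> w = 1 \<or> w = 0" using that by auto
            then show ?thesis
            proof (elim disjE)
            assume w: "w = 2" show ?thesis using C(1) unfolding w card8 by simp
          next
            assume w: "w = -2" show ?thesis using C(2) unfolding w card8 by simp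
          next
            assume w: "w = -1" show ?thesis using C(3) unfolding w card8 by simp
          next
            assume w: "w = 1" show ?thesis using C(4) unfolding w card8 by simp
          next
            assume w: "w = 0" show ?thesis using C(5) unfolding w card8 by simp
            qed
          qed
          ultimately show ?thesis by simp
        qed
        show "finite ?W" by simp
        show "\<mu>$i \<in> ?W" for i by (rule vals)
      qed
      then show ?thesis using vec_of_match by blast
    qed
  next
    assume H: "\<forall>k. \<mu>$k - 1/2 \<in> \<int>"
    have h: "(\<Sum>k\<in>UNIV. \<mu>$k*\<mu>$k - 1/4) = 2" using n by (simp add: sum_subtractf)
    have sq: "\<mu>$k*\<mu>$k \<le> 9/4" for k
      using one_le_sum[of "\<lambda>k. \<mu>$k*\<mu>$k - 1/4" k] h H half_sq by auto
    let ?W = "{-3/2, -1/2, 1/2, 3/2} :: real set"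
    have vals: "\<mu>$i \<in> ?W" for i using half_vals4[OF _ sq[of i]] H by auto
    have e1: "(\<Sum>i\<in>UNIV. (\<lambda>_. 1::real) (\<mu>$i)) = (\<Sum>w\<in>?W. real (c w) * 1)"
      unfolding c_def by (rule sum_level, simp, rule vals)
    have e2: "(\<Sum>i\<in>UNIV. (\<lambda>x. x) (\<mu>$i)) = (\<Sum>w\<in>?W. real (c w) * w)"
      unfolding c_def by (rule sum_level, simp, rule vals)
    have e3: "(\<Sum>i\<in>UNIV. (\<lambda>x. x*x) (\<mu>$i)) = (\<Sum>w\<in>?W. real (c w) * (w*w))"
      unfolding c_def by (rule sum_level, simp, rule vals)
    have r1: "real (c (-3/2)) + real (c (-1/2)) + real (c (1/2)) + real (c (3/2)) = 8"
      "real (c (1/2)) + 3 * real (c (3/2)) = 4 + 3 * real (c (-3/2)) + real (c (-1/2))"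
      "9 * real (c (-3/2)) + real (c (-1/2)) + real (c (1/2)) + 9 * real (c (3/2)) = 16"
      using e1 e2 e3 s n by (simp_all add: algebra_simps)
    have "real (c (-3/2) + c (-1/2) + c (1/2) + c (3/2)) = real 8" using r1(1) by simp
    then have n1: "c (-3/2) + c (-1/2) + c (1/2) + c (3/2) = 8" by (simp only: of_nat_eq_iff)
    have "real (c (1/2) + 3 * c (3/2)) = real (4 + 3 * c (-3/2) + c (-1/2))" using r1(2) by simp
    then have n2: "c (1/2) + 3 * c (3/2) = 4 + 3 * c (-3/2) + c (-1/2)" by (simp only: of_nat_eq_iff)
    have "real (9 * c (-3/2) + c (-1/2) + c (1/2) + 9 * c (3/2)) = real 16" using r1(3) by simp
    then have n3: "9 * c (-3/2) + c (-1/2) + c (1/2) + 9 * c (3/2) = 16" by (simp only: of_nat_eq_iff)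
    have ad: "c (-3/2) + c (3/2) = 1" using n1 n3 by linarith
    then consider (ca) "c (-3/2) = 0" "c (3/2) = 1" | (cb) "c (-3/2) = 1" "c (3/2) = 0" by linarith
    then have "(c (3/2) = 1 \<and> c (-3/2) = 0 \<and> c (-1/2) = 3 \<and> c (1/2) = 4) \<or>
          (c (3/2) = 0 \<and> c (-3/2) = 1 \<and> c (-1/2) = 0 \<and> c (1/2) = 7)"
    proof cases
      case ca then have "c (-1/2) = 3" "c (1/2) = 4" using n1 n2 n3 by linarith+
      then show ?thesis using ca by simp
    next
      case cb then have "c (-1/2) = 0" "c (1/2) = 7" using n1 n2 n3 by linarith+
      then show ?thesis using cb by simp
    qed
    then show ?thesis
    proof (elim disjE conjE)
      assume C: "c (3/2) = 1" "c (-3/2) = 0" "c (-1/2) = 3" "c (1/2) = 4"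
      let ?g = "rho + axis 0 1 - axis 5 1 - axis 6 1 - axis 7 1 :: real^8"
      have "\<exists>\<sigma>. bij \<sigma> \<and> (\<forall>i. \<mu>$i = ?g $ \<sigma> i)"
      proof (rule match[of ?W])
        show "?g $ i \<in> ?W" for i
          by (cases "i = 0"; cases "i = 5"; cases "i = 6"; cases "i = 7") simp_all
        show "card {i. \<mu>$i = w} = card {i. ?g$i = w}" if "w \<in> ?W" for w
        proof -
          have "card {i. \<mu>$i = w} = c w" by (simp add: c_def)
          moreover have "card {i. ?g$i = w} = c w"
          proof -
            have "w = 3/2 \<or> w = -3/2 \<or> w = -1/2 \<or> w = 1/2" using that by auto
            then show ?thesis
            proof (elim disjE)
            assume w: "w = 3/2" show ?thesis using C(1) unfolding w card8 by simp
          next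
            assume w: "w = -3/2" show ?thesis using C(2) unfolding w card8 by simp
          next
            assume w: "w = -1/2" show ?thesis using C(3) unfolding w card8 by simp
          next
            assume w: "w = 1/2" show ?thesis using C(4) unfolding w card8 by simp
            qed
          qed
          ultimately show ?thesis by simp
        qed
        show "finite ?W" by simp
        show "\<mu>$i \<in> ?W" for i by (rule vals)
      qed
      then show ?thesis using vec_of_match by blast
    next
      assume C: "c (3/2) = 0" "c (-3/2) = 1" "c (-1/2) = 0" "c (1/2) = 7"
      let ?g = "rho - 2 *\<^sub>R axis 0 1 :: real^8"
      have "\<exists>\<sigma>. bij \<sigma> \<and> (\<forall>i. \<mu>$i = ?g $ \<sigma> i)"
      proof (rule match[of ?W])
        show "?g $ i \<in> ?W" for i
          by (cases "i = 0") simp_all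
        show "card {i. \<mu>$i = w} = card {i. ?g$i = w}" if "w \<in> ?W" for w
        proof -
          have "card {i. \<mu>$i = w} = c w" by (simp add: c_def)
          moreover have "card {i. ?g$i = w} = c w"
          proof -
            have "w = 3/2 \<or> w = -3/2 \<or> w = -1/2 \<or> w = 1/2" using that by auto
            then show ?thesis
            proof (elim disjE)
            assume w: "w = 3/2" show ?thesis using C(1) unfolding w card8 by simp
          next
            assume w: "w = -3/2" show ?thesis using C(2) unfolding w card8 by simp
          next
            assume w: "w = -1/2" show ?thesis using C(3) unfolding w card8 by simp
          next
            assume w: "w = 1/2" show ?thesis using C(4) unfolding w card8 by simp
            qed
          qed
          ultimately show ?thesis by simp
        qed
        show "finite ?W" by simp
        show "\<mu>$i \<in> ?W" for i by (rule vals)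
      qed
      then show ?thesis using vec_of_match by blast
    qed
  qed
qed



theorem proposition5p8:
  shows "P1 = {\<alpha>. \<alpha> \<bullet> rho = 1 \<and> (\<forall>\<delta>\<in>R_E7. \<alpha> \<bullet> \<delta> \<le> 1) \<and>
                (\<forall>\<mu>\<in>Lambda_E8. \<mu> \<bullet> rho = 1 \<and> \<mu> \<bullet> \<mu> = 4 \<longrightarrow> \<alpha> \<bullet> \<mu> \<le> 2)} \<and>
         (\<forall>\<delta>\<in>R_E7. {\<alpha> \<in> P1. \<alpha> \<bullet> \<delta> = 1} facet_of P1) \<and>
         (\<forall>\<mu>\<in>Lambda_E8. \<mu> \<bullet> rho = 1 \<and> \<mu> \<bullet> \<mu> = 4 \<longrightarrow> {\<alpha> \<in> P1. \<alpha> \<bullet> \<mu> = 2} facet_of P1)"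
proof (intro conjI ballI impI)
  have "P1 = Qset" using P1_sub_Q Q_sub_P1 by blast
  then show "P1 = {\<alpha>. \<alpha> \<bullet> rho = 1 \<and> (\<forall>\<delta>\<in>R_E7. \<alpha> \<bullet> \<delta> \<le> 1) \<and>
                (\<forall>\<mu>\<in>Lambda_E8. \<mu> \<bullet> rho = 1 \<and> \<mu> \<bullet> \<mu> = 4 \<longrightarrow> \<alpha> \<bullet> \<mu> \<le> 2)}"
    unfolding Qset_def .
next
  fix \<delta> assume "\<delta> \<in> R_E7"
  from RE7_class[OF this] obtain \<sigma> where b: "bij \<sigma>" and
    d: "\<delta> = pv \<sigma> (axis 0 1 - axis 1 1) \<or> \<delta> = pv \<sigma> (rho - axis 0 1 - axis 1 1 - axis 2 1 - axis 3 1)"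
    by blast
  from d show "{\<alpha> \<in> P1. \<alpha> \<bullet> \<delta> = 1} facet_of P1"
    using facet_transfer[OF b facet_d0] facet_transfer[OF b facet_d1] by auto
next
  fix \<mu> assume "\<mu> \<in> Lambda_E8" "\<mu> \<bullet> rho = 1 \<and> \<mu> \<bullet> \<mu> = 4"
  from M_class[OF this(1) conjunct1[OF this(2)] conjunct2[OF this(2)]] obtain \<sigma> where b: "bij \<sigma>" and
    m: "\<mu> = pv \<sigma> (2 *\<^sub>R axis 0 1) \<or> \<mu> = pv \<sigma> (axis 0 1 + axis 1 1 + axis 2 1 - axis 3 1)
     \<or> \<mu> = pv \<sigma> (rho + axis 0 1 - axis 5 1 - axis 6 1 - axis 7 1) \<or> \<mu> = pv \<sigma> (rho - 2 *\<^sub>R axis 0 1)"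
    by blast
  from m show "{\<alpha> \<in> P1. \<alpha> \<bullet> \<mu> = 2} facet_of P1"
    using facet_transfer[OF b facet_m1] facet_transfer[OF b facet_m2] facet_transfer[OF b facet_m3]
      facet_transfer[OF b facet_m4] by auto
qed


end
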